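(* Let $L\in\{A_1,A_2,D_4,E_8\}$ and $m:=\dim L$. For every $n\in N(L):=\{\|z\|_2^m:z\in\overline{L}\setminus\{0\}\}$, there exists a lattice code in $\mathbb{R}^m/L$ of size $n$.
   Context: $A_n$ is the set of points of $\mathbb{Z}^{n+1}$ whose coordinates sum to zero, viewed as a lattice in the hyperplane $\{x\in\mathbb{R}^{n+1}:\sum_i x_i=0\}\cong\mathbb{R}^n$ (with induced Euclidean structure); $D_4$ is the set of points of $\mathbb{Z}^4$ whose coordinates sum to an even number; $E_8$ is the set of points of $\mathbb{Z}^8\cup(\mathbb{Z}+\tfrac12)^8$ whose coordinates sum to an even number. $\ell(L)$ is the smallest Euclidean norm of a nonzero vector of $L$ and $\overline{L}:=\ell(L)^{-1}L$. $\operatorname{CO}(m):=\{cQ:c>0,Q\in\operatorname{O}(m)\}$. A lattice code in $\mathbb{R}^m/L$ is a set $(TL)/L$ where $T\in\operatorname{CO}(m)$ is such that $L\subseteq TL$; its size is the index $|TL:L|$. *)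

theory Defs
  imports "HOL-Analysis.Analysis"
begin

text \<open>Root lattice A_n, realised inside the hyperplane sum x_i = 0 of R^(n+1);
  the index type 'n has n+1 elements.\<close>
definition A_lat :: "(real^'n::finite) set" where
  "A_lat = {x. (\<forall>i. x $ i \<in> \<int>) \<and> (\<Sum>i\<in>UNIV. x $ i) = 0}"

definition D4_lat :: "(real^4) set" where
  "D4_lat = {x. (\<forall>i. x $ i \<in> \<int>) \<and> (\<exists>k::int. (\<Sum>i\<in>UNIV. x $ i) = 2 * of_int k)}"

definition E8_lat :: "(real^8) set" where
  "E8_lat = {x. ((\<forall>i. x $ i \<in> \<int>) \<or> (\<forall>i. x $ i - 1/2 \<in> \<int>))
                 \<and> (\<exists>k::int. (\<Sum>i\<in>UNIV. x $ i) = 2 * of_int k)}"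

definition min_norm :: "'a::euclidean_space set \<Rightarrow> real" where
  "min_norm L = Inf {norm x | x. x \<in> L \<and> x \<noteq> 0}"

definition normalized_lat :: "'a::euclidean_space set \<Rightarrow> 'a set" where
  "normalized_lat L = (\<lambda>x. (1 / min_norm L) *\<^sub>R x) ` L"

definition N_set :: "'a::euclidean_space set \<Rightarrow> real set" where
  "N_set L = {norm z ^ dim L | z. z \<in> normalized_lat L \<and> z \<noteq> 0}"

text \<open>CO(m) acting on the m-dimensional space V = span L (with induced Euclidean
  structure): a linear map of V onto itself which scales all norms by a fixed c > 0.\<close>
definition conf_orth_on :: "'a::euclidean_space set \<Rightarrow> ('a \<Rightarrow> 'a) \<Rightarrow> bool" where
  "conf_orth_on V T \<longleftrightarrow> linear T \<and> T ` V = V \<and> (\<exists>c>0. \<forall>x\<in>V. norm (T x) = c * norm x)"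

definition lattice_index :: "'a::euclidean_space set \<Rightarrow> 'a set \<Rightarrow> nat" where
  "lattice_index M L = card {(\<lambda>y. x + y) ` L | x. x \<in> M}"

definition has_lattice_code_of_size :: "'a::euclidean_space set \<Rightarrow> real \<Rightarrow> bool" where
  "has_lattice_code_of_size L n \<longleftrightarrow>
     (\<exists>T. conf_orth_on (span L) T \<and> L \<subseteq> T ` L \<and> real (lattice_index (T ` L) L) = n)"

end

theory Submission
  imports Defs
begin

definition Zv :: "(real^'n) set" where "Zv = {x. \<forall>i. x$i \<in> \<int>}"
definition UC :: "(real^'n) set" where "UC = {x. \<forall>i. 0 \<le> x$i \<and> x$i < 1}"
definition flv :: "real^'n \<Rightarrow> real^'n" where "flv x = (\<chi> i. of_int \<lfloor>x$i\<rfloor>)"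

lemma Zv_add: "x \<in> Zv \<Longrightarrow> y \<in> Zv \<Longrightarrow> x + y \<in> Zv"
  by (auto simp: Zv_def)
lemma Zv_diff: "x \<in> Zv \<Longrightarrow> y \<in> Zv \<Longrightarrow> x - y \<in> Zv"
  by (auto simp: Zv_def)
lemma Zv_0: "0 \<in> Zv"
  by (auto simp: Zv_def)
lemma flv_Zv: "flv x \<in> Zv"
  by (auto simp: Zv_def flv_def)
lemma flv_UC: "x - flv x \<in> UC"
  by (auto simp: UC_def flv_def) linarith

lemma UC_unique:
  assumes "z \<in> Zv" "z' \<in> Zv" "x - z \<in> UC" "x - z' \<in> UC"
  shows "z = z'"
proof -
  have "z$i = z'$i" for i
  proof -
    obtain m where m: "z$i = of_int m" using assms(1) by (auto simp: Zv_def elim!: Ints_cases)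
    obtain m' where m': "z'$i = of_int m'" using assms(2) by (auto simp: Zv_def elim!: Ints_cases)
    have h: "0 \<le> x$i - z$i \<and> x$i - z$i < 1" "0 \<le> x$i - z'$i \<and> x$i - z'$i < 1"
      using assms(3,4) by (auto simp: UC_def)
    have "\<lfloor>x$i\<rfloor> = m" using h m by (intro floor_unique) auto
    moreover have "\<lfloor>x$i\<rfloor> = m'" using h m' by (intro floor_unique) auto
    ultimately show ?thesis using m m' by simp
  qed
  then show ?thesis by (simp add: vec_eq_iff)
qed

lemma UC_sets: "UC \<in> sets borel" unfolding UC_def by measurable

lemma UC_sub: "UC \<subseteq> cbox 0 One"
proof
  fix x :: "real^'n" assume "x \<in> UC"
  then have "0 \<le> x$i \<and> x$i \<le> 1" for i unfolding UC_def by (auto intro: less_imp_le)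
  then show "x \<in> cbox 0 One" by (simp add: mem_box_cart Cart_1[symmetric])
qed

lemma UC_bounded: "bounded UC"
  using UC_sub bounded_cbox bounded_subset by blast

lemma UC_lmeasurable: "UC \<in> lmeasurable"
  by (intro bounded_set_imp_lmeasurable UC_bounded) (use UC_sets in auto)

lemma UC_pos: "0 < measure lebesgue (UC :: (real^'n) set)"
proof -
  have "box 0 One \<subseteq> (UC :: (real^'n) set)"
  proof
    fix x :: "real^'n" assume "x \<in> box 0 One"
    then have "0 < x$i \<and> x$i < 1" for i by (simp add: mem_box_cart Cart_1[symmetric])
    then show "x \<in> UC" unfolding UC_def by (auto intro: less_imp_le)
  qed
  then have "measure lebesgue (box (0::real^'n) One) \<le> measure lebesgue (UC :: (real^'n) set)"
    by (rule measure_mono_fmeasurable[OF _ _ UC_lmeasurable]) auto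
  moreover have "measure lebesgue (box (0::real^'n) One) = 1" by (simp add: measure_lborel_box_eq)
  ultimately show ?thesis by simp
qed

lemma finite_Zv_bounded:
  assumes "bounded S"
  shows "finite (Zv \<inter> S)"
proof -
  obtain M where M: "\<And>x. x \<in> S \<Longrightarrow> norm x \<le> M" using assms bounded_iff by blast
  define K where "K = \<lceil>M\<rceil>"
  have "Zv \<inter> S \<subseteq> (\<lambda>f. \<chi> i. of_int (f i)) ` (PiE UNIV (\<lambda>_. {-K..K}))"
  proof
    fix x assume x: "x \<in> Zv \<inter> S"
    have xe: "x = (\<chi> i. of_int \<lfloor>x$i\<rfloor>)"
      using x by (auto simp: vec_eq_iff Zv_def elim!: Ints_cases)
    have "\<bar>x$i\<bar> \<le> M" for i using M[of x] x component_le_norm_cart[of x i] by auto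
    then have "(\<lambda>i. \<lfloor>x$i\<rfloor>) \<in> PiE UNIV (\<lambda>_. {-K..K})"
    proof -
      have "-K \<le> \<lfloor>x$i\<rfloor> \<and> \<lfloor>x$i\<rfloor> \<le> K" for i
      proof -
        have "-M \<le> x$i" "x$i \<le> M" using \<open>\<bar>x$i\<bar> \<le> M\<close> by auto
        then show ?thesis unfolding K_def by linarith
      qed
      then show ?thesis by auto
    qed
    then show "x \<in> (\<lambda>f. \<chi> i. of_int (f i)) ` (PiE UNIV (\<lambda>_. {-K..K}))"
      using xe by (intro image_eqI[where x="\<lambda>i. \<lfloor>x$i\<rfloor>"]) auto
  qed
  moreover have "finite (PiE (UNIV::'a set) (\<lambda>_. {-K..K}))" by (intro finite_PiE) auto
  ultimately show ?thesis using finite_subset by blast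
qed

lemma mfu:
  assumes "finite S" "\<And>i. i \<in> S \<Longrightarrow> A i \<in> lmeasurable" "disjoint_family_on A S"
  shows "measure lebesgue (\<Union>i\<in>S. A i) = (\<Sum>i\<in>S. measure lebesgue (A i))"
proof (rule measure_finite_Union[OF assms(1) _ assms(3)])
  show "A ` S \<subseteq> sets lebesgue" using assms(2) fmeasurableD by blast
  fix i assume "i \<in> S"
  then have "A i \<in> lmeasurable" by (rule assms(2))
  then show "emeasure lebesgue (A i) \<noteq> \<infinity>" by (metis fmeasurableD2 infinity_ennreal_def)
qed

lemma core:
  fixes f :: "real^'n::{finite,wellorder} \<Rightarrow> real^'n::_"
  assumes lin: "linear f" and dt: "det (matrix f) \<noteq> 0" and sub: "f ` Zv \<subseteq> Zv"
  shows "real (lattice_index Zv (f ` Zv)) = \<bar>det (matrix f)\<bar>"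
proof -
  have injf: "inj f" using det_nz_iff_inj[OF lin] dt by simp
  have surjf: "surj f" using lin injf linear_injective_imp_surjective by blast
  define g where "g = inv f"
  have fg: "f (g x) = x" for x unfolding g_def using surjf by (simp add: surj_f_inv_f)
  have gf: "g (f x) = x" for x unfolding g_def using injf by simp
  have ling: "linear g" unfolding g_def using lin injf inj_linear_imp_inv_linear by blast
  define Lam where "Lam = f ` Zv"
  define P where "P = f ` UC"
  have Lam_Zv: "Lam \<subseteq> Zv" using sub Lam_def by simp
  have Lam_add: "a + b \<in> Lam" if ab: "a \<in> Lam" "b \<in> Lam" for a b
  proof -
    obtain u v where "u \<in> Zv" "v \<in> Zv" "a = f u" "b = f v" using ab Lam_def by auto
    then show ?thesis unfolding Lam_def using linear_add[OF lin, of u v] Zv_add by (metis image_eqI)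
  qed
  have Lam_diff: "a - b \<in> Lam" if ab: "a \<in> Lam" "b \<in> Lam" for a b
  proof -
    obtain u v where "u \<in> Zv" "v \<in> Zv" "a = f u" "b = f v" using ab Lam_def by auto
    then show ?thesis unfolding Lam_def using linear_diff[OF lin, of u v] Zv_diff by (metis image_eqI)
  qed
  have Lam_0: "0 \<in> Lam" unfolding Lam_def using Zv_0 linear_0[OF lin] by force
  have Lam_neg: "- a \<in> Lam" if "a \<in> Lam" for a using Lam_diff[OF Lam_0 that] by simp
  have F2: "\<exists>w\<in>Lam. x - w \<in> P" for x
  proof -
    have "f (flv (g x)) \<in> Lam" unfolding Lam_def using flv_Zv by blast
    moreover have "x - f (flv (g x)) = f (g x - flv (g x))" using linear_diff[OF lin] fg by simp
    then have "x - f (flv (g x)) \<in> P" unfolding P_def using flv_UC by auto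
    ultimately show ?thesis by blast
  qed
  have F2u: "w = w'" if H: "w \<in> Lam" "w' \<in> Lam" "x - w \<in> P" "x - w' \<in> P" for x w w'
  proof -
    obtain z where z: "z \<in> Zv" "w = f z" using H(1) Lam_def by auto
    obtain z' where z': "z' \<in> Zv" "w' = f z'" using H(2) Lam_def by auto
    obtain c where c: "c \<in> UC" "x - w = f c" using H(3) P_def by auto
    obtain c' where c': "c' \<in> UC" "x - w' = f c'" using H(4) P_def by auto
    have "g x - z = c" using c z linear_diff[OF ling, of x "f z"] gf by simp
    moreover have "g x - z' = c'" using c' z' linear_diff[OF ling, of x "f z'"] gf by simp
    ultimately have "z = z'" using UC_unique[OF z(1) z'(1)] c c' by blast
    thus ?thesis using z z' by simp
  qed
  define R where "R = Zv \<inter> P"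
  define cs where "cs r = (\<lambda>y. r + y) ` Lam" for r
  have cs_eq: "cs a = cs b" if "a - b \<in> Lam" for a b
  proof -
    have "cs a \<subseteq> cs b" if "a - b \<in> Lam" for a b
    proof
      fix y assume "y \<in> cs a"
      then obtain l where l: "l \<in> Lam" "y = a + l" using cs_def by auto
      then have "y = b + ((a - b) + l)" by simp
      then show "y \<in> cs b" unfolding cs_def using Lam_add[OF that l(1)] by blast
    qed
    moreover have "b - a \<in> Lam" using Lam_neg[OF that] by simp
    ultimately show ?thesis using that by blast
  qed
  have Q: "{(\<lambda>y. x + y) ` (f ` Zv) |x. x \<in> Zv} = cs ` R"
  proof (intro equalityI subsetI)
    fix q assume "q \<in> {(\<lambda>y. x + y) ` (f ` Zv) |x. x \<in> Zv}"
    then obtain x where x: "x \<in> Zv" "q = cs x" unfolding cs_def Lam_def by auto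
    obtain w where w: "w \<in> Lam" "x - w \<in> P" using F2 by blast
    have "x - w \<in> R" using x w Lam_Zv Zv_diff R_def by auto
    moreover have "cs x = cs (x - w)" using cs_eq w by simp
    ultimately show "q \<in> cs ` R" using x by blast
  next
    fix q assume "q \<in> cs ` R"
    then obtain r where "r \<in> R" "q = cs r" by auto
    then show "q \<in> {(\<lambda>y. x + y) ` (f ` Zv) |x. x \<in> Zv}" unfolding cs_def Lam_def R_def by auto
  qed
  have injcs: "inj_on cs R"
  proof
    fix r r' assume rr: "r \<in> R" "r' \<in> R" "cs r = cs r'"
    have "r \<in> cs r" unfolding cs_def using Lam_0 by force
    then have "r \<in> cs r'" using rr by simp
    then obtain w where w: "w \<in> Lam" "r = r' + w" unfolding cs_def by auto
    have "r - 0 \<in> P" "r - w \<in> P" using rr w R_def by auto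
    then have "w = 0" using F2u[OF Lam_0 w(1)] by simp
    then show "r = r'" using w by simp
  qed
  have cardR: "lattice_index Zv (f ` Zv) = card R"
    unfolding lattice_index_def Q using card_image[OF injcs] .
  have bP: "bounded P" unfolding P_def
    using lin linear_conv_bounded_linear by (intro bounded_linear_image UC_bounded) auto
  have finR: "finite R" unfolding R_def using finite_Zv_bounded bP by blast
  have mP: "P \<in> lmeasurable" "measure lebesgue P = \<bar>det (matrix f)\<bar> * measure lebesgue (UC::(real^'n::_) set)"
    unfolding P_def using measurable_linear_image[OF lin UC_lmeasurable] measure_linear_image[OF lin UC_lmeasurable] by auto
  define Z1 where "Z1 = {z \<in> Zv. P \<inter> (+) z ` UC \<noteq> {}}"
  have finZ1: "finite Z1"
  proof -
    obtain M1 where M1: "\<And>p. p \<in> P \<Longrightarrow> norm p \<le> M1" using bP bounded_iff by blast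
    obtain M2 where M2: "\<And>c. c \<in> (UC::(real^'n::_) set) \<Longrightarrow> norm c \<le> M2" using UC_bounded bounded_iff by blast
    have "Z1 \<subseteq> Zv \<inter> cball 0 (M1 + M2)"
    proof
      fix z assume "z \<in> Z1"
      then obtain c where c: "c \<in> UC" "z + c \<in> P" "z \<in> Zv" unfolding Z1_def by auto
      have "norm z \<le> norm (z + c) + norm c" using norm_triangle_ineq4[of "z + c" c] by simp
      then have "norm z \<le> M1 + M2" using M1[OF c(2)] M2[OF c(1)] by linarith
      then show "z \<in> Zv \<inter> cball 0 (M1 + M2)" using c(3) by (simp add: mem_cball_0)
    qed
    then show ?thesis by (rule finite_subset[OF _ finite_Zv_bounded[OF bounded_cball]])
  qed
  have "\<forall>x. \<exists>w. w \<in> Lam \<and> x - w \<in> P" using F2 by blast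
  then obtain wz where wz: "\<And>z. wz z \<in> Lam \<and> z - wz z \<in> P" by metis
  define piece where "piece z = (\<lambda>y. y - wz z) ` (P \<inter> (+) z ` UC)" for z
  have lmT: "(+) z ` UC \<in> lmeasurable" for z using measurable_translation UC_lmeasurable by blast
  have lm1: "P \<inter> (+) z ` UC \<in> lmeasurable" for z
    using fmeasurable_Int_fmeasurable[OF mP(1)] lmT fmeasurableD by blast
  have lm2: "piece z \<in> lmeasurable" for z
    unfolding piece_def using measurable_translation_subtract lm1 by blast
  have eqm: "measure lebesgue (piece z) = measure lebesgue (P \<inter> (+) z ` UC)" for z
    unfolding piece_def by (rule measure_translation_subtract)
  have Pdec: "P = (\<Union>z\<in>Z1. P \<inter> (+) z ` UC)"
  proof (intro equalityI subsetI)
    fix p assume p: "p \<in> P"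
    have "p \<in> (+) (flv p) ` UC" using flv_UC[of p] by (intro image_eqI[where x="p - flv p"]) auto
    moreover then have "flv p \<in> Z1" unfolding Z1_def using p flv_Zv by blast
    ultimately show "p \<in> (\<Union>z\<in>Z1. P \<inter> (+) z ` UC)" using p by blast
  qed auto
  have disj1: "disjoint_family_on (\<lambda>z. P \<inter> (+) z ` UC) Z1"
    unfolding disjoint_family_on_def
  proof (intro ballI impI)
    fix z z' assume zz: "z \<in> Z1" "z' \<in> Z1" "z \<noteq> z'"
    show "P \<inter> (+) z ` UC \<inter> (P \<inter> (+) z' ` UC) = {}"
    proof (rule ccontr)
      assume "P \<inter> (+) z ` UC \<inter> (P \<inter> (+) z' ` UC) \<noteq> {}"
      then obtain c c' where cc: "c \<in> UC" "c' \<in> UC" "z + c = z' + c'" by auto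
      have "(z + c) - z \<in> UC" using cc(1) by simp
      moreover have "(z + c) - z' \<in> UC" unfolding cc(3) using cc(2) by simp
      ultimately have "z = z'" using UC_unique zz Z1_def by blast
      then show False using zz by simp
    qed
  qed
  have disj2: "disjoint_family_on piece Z1"
    unfolding disjoint_family_on_def
  proof (intro ballI impI)
    fix z z' assume zz: "z \<in> Z1" "z' \<in> Z1" "z \<noteq> z'"
    show "piece z \<inter> piece z' = {}"
    proof (rule ccontr)
      assume "piece z \<inter> piece z' \<noteq> {}"
      then obtain c c' where c: "c \<in> UC" "c' \<in> UC" "z + c \<in> P" "z' + c' \<in> P"
        "z + c - wz z = z' + c' - wz z'"
        unfolding piece_def by auto
      define y where "y = z + c - wz z"
      have y2: "y = z' + c' - wz z'" using c(5) y_def by simp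
      have "y - (- wz z) \<in> P" using c(3) y_def by simp
      moreover have "y - (- wz z') \<in> P" using c(4) y2 by simp
      ultimately have "- wz z = - wz z'" using F2u[of "- wz z" "- wz z'" y] Lam_neg wz by blast
      then have ww: "wz z = wz z'" by simp
      have "(y + wz z) - z \<in> UC" using c(1) y_def by simp
      moreover have "(y + wz z) - z' \<in> UC" using c(2) y2 ww by simp
      ultimately have "z = z'" using UC_unique zz Z1_def by blast
      then show False using zz by simp
    qed
  qed
  have U: "(\<Union>z\<in>Z1. piece z) = (\<Union>r\<in>R. (+) r ` UC)"
  proof (intro equalityI subsetI)
    fix y assume "y \<in> (\<Union>z\<in>Z1. piece z)"
    then obtain z c where zc: "z \<in> Z1" "c \<in> UC" "z + c \<in> P" "y = z + c - wz z"
      unfolding piece_def by auto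
    have "z - wz z \<in> R" using zc wz[of z] Lam_Zv Zv_diff R_def Z1_def by auto
    moreover have "y = (z - wz z) + c" using zc by simp
    ultimately show "y \<in> (\<Union>r\<in>R. (+) r ` UC)" using zc by blast
  next
    fix y assume "y \<in> (\<Union>r\<in>R. (+) r ` UC)"
    then obtain r c where rc: "r \<in> R" "c \<in> UC" "y = r + c" by auto
    obtain w0 where w0: "w0 \<in> Lam" "y - w0 \<in> P" using F2 by blast
    define z where "z = r - w0"
    have zZ: "z \<in> Zv" using rc w0 Lam_Zv Zv_diff R_def z_def by auto
    have "z - (- w0) \<in> P" using rc R_def z_def by simp
    then have wzz: "wz z = - w0" using F2u[of "wz z" "- w0" z] wz Lam_neg w0 by blast
    have "y - w0 = z + c" using rc z_def by simp
    then have "y - w0 \<in> P \<inter> (+) z ` UC" using w0 rc by auto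
    then have "z \<in> Z1" using zZ Z1_def by blast
    moreover have "y \<in> piece z" unfolding piece_def wzz
      using \<open>y - w0 \<in> P \<inter> (+) z ` UC\<close> by (intro image_eqI[where x="y - w0"]) auto
    ultimately show "y \<in> (\<Union>z\<in>Z1. piece z)" by blast
  qed
  have disj3: "disjoint_family_on (\<lambda>r. (+) r ` UC) R"
    unfolding disjoint_family_on_def
  proof (intro ballI impI)
    fix r r' assume rr: "r \<in> R" "r' \<in> R" "r \<noteq> r'"
    show "(+) r ` UC \<inter> (+) r' ` UC = {}"
    proof (rule ccontr)
      assume "(+) r ` UC \<inter> (+) r' ` UC \<noteq> {}"
      then obtain c c' where cc: "c \<in> UC" "c' \<in> UC" "r + c = r' + c'" by auto
      have "(r + c) - r \<in> UC" using cc(1) by simp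
      moreover have "(r + c) - r' \<in> UC" unfolding cc(3) using cc(2) by simp
      ultimately have "r = r'" using UC_unique rr R_def by blast
      then show False using rr by simp
    qed
  qed
  have "measure lebesgue P = (\<Sum>z\<in>Z1. measure lebesgue (P \<inter> (+) z ` UC))"
    by (subst Pdec, rule mfu[OF finZ1 lm1 disj1])
  also have "\<dots> = (\<Sum>z\<in>Z1. measure lebesgue (piece z))" using eqm by simp
  also have "\<dots> = measure lebesgue (\<Union>z\<in>Z1. piece z)"
    by (rule mfu[OF finZ1 lm2 disj2, symmetric])
  also have "\<dots> = measure lebesgue (\<Union>r\<in>R. (+) r ` UC)" using U by simp
  also have "\<dots> = (\<Sum>r\<in>R. measure lebesgue ((+) r ` UC))"
    by (rule mfu[OF finR lmT disj3])
  also have "\<dots> = (\<Sum>r\<in>R. measure lebesgue (UC::(real^'n::_) set))"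
    by (intro sum.cong refl measure_translation)
  also have "\<dots> = real (card R) * measure lebesgue (UC::(real^'n::_) set)" by simp
  finally have "\<bar>det (matrix f)\<bar> * measure lebesgue (UC::(real^'n::_) set) = real (card R) * measure lebesgue (UC::(real^'n::_) set)"
    using mP by simp
  moreover have pos: "0 < measure lebesgue (UC::(real^'n::_) set)" by (rule UC_pos)
  ultimately have "\<bar>det (matrix f)\<bar> = real (card R)" by simp
  then show ?thesis using cardR by simp
qed

lemma index_inj:
  fixes h :: "'a::euclidean_space \<Rightarrow> 'b::euclidean_space"
  assumes lin: "linear h" and inj: "inj_on h V" and sV: "subspace V" and MV: "M \<subseteq> V" and LV: "L \<subseteq> V"
  shows "lattice_index (h ` M) (h ` L) = lattice_index M L"
proof -
  define C where "C = {(\<lambda>y. x + y) ` L |x. x \<in> M}"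
  have img: "h ` ((\<lambda>y. x + y) ` L) = (\<lambda>y. h x + y) ` (h ` L)" for x
    using linear_add[OF lin] by (auto simp: image_image)
  have eq: "{(\<lambda>y. x + y) ` (h ` L) |x. x \<in> h ` M} = (\<lambda>A. h ` A) ` C"
    unfolding C_def using img by blast
  have sub: "A \<subseteq> V" if "A \<in> C" for A
    using that MV LV sV unfolding C_def by (auto intro: subspace_add)
  have "inj_on (\<lambda>A. h ` A) C"
    using inj_on_image_eq_iff[OF inj] sub by (auto simp: inj_on_def)
  then show ?thesis unfolding lattice_index_def eq C_def[symmetric] by (rule card_image)
qed

lemma index_basis:
  fixes B :: "real^'m::{finite,wellorder} \<Rightarrow> 'a::euclidean_space"
    and G :: "real^'m::{finite,wellorder} \<Rightarrow> real^'m::_"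
  assumes linB: "linear B" and injB: "inj B" and linG: "linear G"
    and comm: "\<And>z. z \<in> Zv \<Longrightarrow> S (B z) = B (G z)"
    and GZ: "G ` Zv \<subseteq> Zv" and dG: "det (matrix G) \<noteq> 0"
  shows "real (lattice_index (B ` Zv) (S ` B ` Zv)) = \<bar>det (matrix G)\<bar>"
proof -
  have "S ` B ` Zv = B ` G ` Zv" using comm by (force simp: image_image)
  then have "lattice_index (B ` Zv) (S ` B ` Zv) = lattice_index Zv (G ` Zv)"
    using index_inj[OF linB, of UNIV Zv "G ` Zv"] injB by simp
  then show ?thesis using core[OF linG dG GZ] by simp
qed

lemma code_from_sim:
  fixes L :: "'a::euclidean_space set"
  assumes linS: "linear S" and linT: "linear T" and SL: "S ` L \<subseteq> L"
    and TV: "T ` span L \<subseteq> span L"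
    and ST: "\<And>x. x \<in> span L \<Longrightarrow> S (T x) = x" and TS: "\<And>x. x \<in> span L \<Longrightarrow> T (S x) = x"
    and c: "c > 0" and nT: "\<And>x. x \<in> span L \<Longrightarrow> norm (T x) = c * norm x"
    and idx: "real (lattice_index L (S ` L)) = n"
  shows "has_lattice_code_of_size L n"
proof -
  have SV: "S ` span L \<subseteq> span L"
    using span_linear_image[OF linS, of L] span_mono[OF SL] by blast
  have "T ` span L = span L"
  proof
    show "span L \<subseteq> T ` span L"
    proof
      fix x assume "x \<in> span L"
      then have "x = T (S x)" "S x \<in> span L" using TS SV by auto
      then show "x \<in> T ` span L" by blast
    qed
  qed (rule TV)
  have co: "conf_orth_on (span L) T" unfolding conf_orth_on_def
  proof (intro conjI)
    show "linear T" by (rule linT)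
    show "T ` span L = span L" by fact
    show "\<exists>c>0. \<forall>x\<in>span L. norm (T x) = c * norm x" using c nT by (intro exI[of _ c]) auto
  qed
  have LTL: "L \<subseteq> T ` L"
  proof
    fix x assume x: "x \<in> L"
    have "x = T (S x)" using TS[OF span_base[OF x]] by simp
    moreover have "S x \<in> L" using SL x by blast
    ultimately show "x \<in> T ` L" by (rule image_eqI)
  qed
  have injS: "inj_on S (span L)" by (metis TS inj_on_def)
  have TLV: "T ` L \<subseteq> span L" using TV span_superset by (meson image_mono order_trans)
  have "S ` T ` L = L" unfolding image_image using ST[OF span_base] by simp
  then have "lattice_index (T ` L) L = lattice_index L (S ` L)"
    using index_inj[OF linS injS subspace_span TLV span_superset] by simp
  then have "real (lattice_index (T ` L) L) = n" using idx by simp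
  then show ?thesis unfolding has_lattice_code_of_size_def using co LTL by blast
qed

lemma sim_generic:
  fixes S :: "real^'n \<Rightarrow> real^'n"
  assumes lin: "linear S" and k: "k > 0" and nrm: "\<And>x. norm (S x) ^ 2 = k * norm x ^ 2"
  defines "T \<equiv> (\<lambda>x. (1/k) *\<^sub>R adjoint S x)"
  shows "linear T" "\<And>x. T (S x) = x" "\<And>x. S (T x) = x" "\<And>x. norm (T x) = (1 / sqrt k) * norm x"
    "det (matrix S) ^ 2 = k ^ CARD('n)"
proof -
  have inn: "inner (S x) (S y) = k * inner x y" for x y
  proof -
    have "norm (S (x + y)) ^ 2 = k * norm (x + y) ^ 2" by (rule nrm)
    then have "norm (S x + S y) ^ 2 = k * norm (x + y) ^ 2" using linear_add[OF lin] by simp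
    then have "norm (S x) ^ 2 + 2 * inner (S x) (S y) + norm (S y) ^ 2 = k * (norm x ^ 2 + 2 * inner x y + norm y ^ 2)"
      by (simp add: power2_norm_eq_inner inner_add_left inner_add_right inner_commute algebra_simps)
    then show ?thesis using nrm[of x] nrm[of y] by (simp add: algebra_simps)
  qed
  have ladj: "linear (adjoint S)" using adjoint_linear[OF lin] .
  show linT: "linear T" unfolding T_def using ladj by (metis linear_compose_scale_right)
  have AS: "adjoint S (S y) = k *\<^sub>R y" for y
  proof -
    have "inner x (adjoint S (S y)) = inner x (k *\<^sub>R y)" for x
      using adjoint_clauses(1)[OF lin, of x "S y"] inn[of x y] by (simp add: inner_commute)
    then show ?thesis using vector_eq_ldot by blast
  qed
  show TS: "T (S x) = x" for x unfolding T_def using AS k by simp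
  have injS: "inj S" by (metis TS injI)
  have surjS: "surj S" using lin injS linear_injective_imp_surjective by blast
  show ST: "S (T x) = x" for x
  proof -
    obtain y where "x = S y" using surjS by (metis surjD)
    then show ?thesis using TS by simp
  qed
  show "norm (T x) = (1 / sqrt k) * norm x" for x
  proof -
    have "norm x ^ 2 = k * norm (T x) ^ 2" using nrm[of "T x"] ST by simp
    then have "sqrt (norm x ^ 2) = sqrt k * sqrt (norm (T x) ^ 2)" by (simp add: real_sqrt_mult)
    then have "norm x = sqrt k * norm (T x)" by simp
    then show ?thesis using k by (simp add: field_simps)
  qed
  have "adjoint S \<circ> S = (*\<^sub>R) k" using AS by (simp add: fun_eq_iff)
  then have "matrix (adjoint S) ** matrix S = matrix ((*\<^sub>R) k)"
    using matrix_compose[OF lin ladj] by simp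
  then have "det (matrix (adjoint S) ** matrix S) = k ^ CARD('n)" by simp
  then show "det (matrix S) ^ 2 = k ^ CARD('n)"
    by (simp add: det_mul matrix_adjoint[OF lin] det_transpose power2_eq_square)
qed

lemma halve_sq:
  fixes f :: "'a \<Rightarrow> int"
  assumes "finite I" "even (card I)" "even (\<Sum>i\<in>I. f i)"
  shows "\<exists>g. 2 * (\<Sum>i\<in>I. (g i)^2) = (\<Sum>i\<in>I. (f i)^2)"
  using assms
proof (induction "card I" arbitrary: I rule: less_induct)
  case less
  have pair: "\<exists>g. 2 * (\<Sum>i\<in>I. (g i)^2) = (\<Sum>i\<in>I. (f i)^2)"
    if pq: "p \<in> I" "q \<in> I" "p \<noteq> q" "even (f p + f q)" for p q
  proof -
    define J where "J = I - {p, q}"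
    have fJ: "finite J" using less.prems(1) J_def by simp
    have sumI: "(\<Sum>i\<in>I. h i) = h p + h q + (\<Sum>i\<in>J. h i)" for h :: "'a \<Rightarrow> int"
    proof -
      have "I = insert p (insert q J)" using pq J_def by auto
      moreover have "p \<notin> insert q J" "q \<notin> J" using pq J_def by auto
      ultimately show ?thesis using fJ by (simp add: add.assoc)
    qed
    have cI: "card I = card J + 2"
    proof -
      have "I = insert p (insert q J)" using pq J_def by auto
      moreover have "p \<notin> insert q J" "q \<notin> J" using pq J_def by auto
      ultimately show ?thesis using fJ by simp
    qed
    have "even (\<Sum>i\<in>J. f i)" using sumI[of f] less.prems(3) pq(4) by simp
    moreover have "even (card J)" using cI less.prems(2) by simp
    moreover have "card J < card I" using cI by simp
    ultimately obtain g where g: "2 * (\<Sum>i\<in>J. (g i)^2) = (\<Sum>i\<in>J. (f i)^2)"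
      using less.hyps[of J] fJ by blast
    obtain u where u: "f p + f q = 2 * u" using pq(4) by (metis evenE)
    define g' where "g' = g(p := u, q := f p - u)"
    have sJ: "(\<Sum>i\<in>J. (g' i)^2) = (\<Sum>i\<in>J. (g i)^2)" by (rule sum.cong) (auto simp: g'_def J_def)
    have gp: "g' p = u" and gq: "g' q = f p - u" using pq(3) by (auto simp: g'_def)
    have key: "2 * (u^2 + (f p - u)^2) = (f p)^2 + (f q)^2"
    proof -
      have fq: "f q = 2 * u - f p" using u by simp
      show ?thesis unfolding fq by (simp add: power2_eq_square algebra_simps)
    qed
    have "2 * (u^2 + (f p - u)^2 + (\<Sum>i\<in>J. (g i)^2)) = 2 * (u^2 + (f p - u)^2) + 2 * (\<Sum>i\<in>J. (g i)^2)"
      by (rule distrib_left)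
    also have "\<dots> = (f p)^2 + (f q)^2 + (\<Sum>i\<in>J. (f i)^2)" by (simp only: key g)
    finally have "2 * (\<Sum>i\<in>I. (g' i)^2) = (\<Sum>i\<in>I. (f i)^2)"
      unfolding sumI[of "\<lambda>i. (g' i)^2"] sumI[of "\<lambda>i. (f i)^2"] gp gq sJ add.assoc .
    then show ?thesis by blast
  qed
  show ?case
  proof (cases "I = {}")
    case True then show ?thesis by auto
  next
    case False
    then obtain a where a: "a \<in> I" by blast
    have "card I \<noteq> 0" using False less.prems(1) by simp
    then have "card I \<ge> 2" using less.prems(2) by presburger
    then have "card (I - {a}) \<ge> 1" using a less.prems(1) by simp
    then obtain b where b: "b \<in> I" "b \<noteq> a"
      by (metis One_nat_def card.empty not_one_le_zero Diff_iff ex_in_conv insertI1 insert_Diff_single)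
    show ?thesis
    proof (cases "even (f a + f b)")
      case True then show ?thesis using pair a b by metis
    next
      case odd: False
      define J where "J = I - {a, b}"
      have fJ: "finite J" using less.prems(1) J_def by simp
      have "I = insert a (insert b J)" using a b J_def by auto
      moreover have "a \<notin> insert b J" "b \<notin> J" using a b J_def by auto
      ultimately have "(\<Sum>i\<in>I. f i) = f a + f b + (\<Sum>i\<in>J. f i)" using fJ by (simp add: add.assoc)
      then have "odd (\<Sum>i\<in>J. f i)" using odd less.prems(3) by auto
      then have "J \<noteq> {}" by auto
      then obtain c where c: "c \<in> J" by blast
      then have cI: "c \<in> I" "c \<noteq> a" "c \<noteq> b" using J_def by auto
      have "even (f a + f c) \<or> even (f b + f c)" using odd by presburger
      then show ?thesis using pair[of a c] pair[of b c] a b cI by metis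
    qed
  qed
qed

lemma nsq: "norm (x::real^'n) ^ 2 = (\<Sum>i\<in>UNIV. (x$i)^2)"
  unfolding norm_vec_def L2_set_def by (simp add: sum_nonneg)

lemma even_int_vec_ge2:
  fixes x :: "real^'n"
  assumes int: "\<forall>i. x$i \<in> \<int>" and ev: "\<exists>k::int. (\<Sum>i\<in>UNIV. x$i) = 2 * of_int k" and nz: "x \<noteq> 0"
  shows "2 \<le> norm x ^ 2"
proof -
  define f where "f i = \<lfloor>x$i\<rfloor>" for i
  have xf: "x$i = of_int (f i)" for i using int unfolding f_def by (metis Ints_cases floor_of_int)
  obtain k where k: "(\<Sum>i\<in>UNIV. x$i) = 2 * of_int k" using ev by blast
  have "(\<Sum>i\<in>UNIV. f i) = 2 * k"
  proof -
    have "real_of_int (\<Sum>i\<in>UNIV. f i) = real_of_int (2 * k)" using k xf by simp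
    then show ?thesis by linarith
  qed
  moreover have "(\<Sum>i\<in>UNIV. (f i)^2) = (\<Sum>i\<in>UNIV. f i) + (\<Sum>i\<in>UNIV. f i * (f i - 1))"
    by (simp add: sum.distrib[symmetric] power2_eq_square algebra_simps)
  moreover have "even (\<Sum>i\<in>UNIV. f i * (f i - 1))"
    by (intro dvd_sum) auto
  ultimately have evs: "even (\<Sum>i\<in>UNIV. (f i)^2)" by simp
  obtain j where "x$j \<noteq> 0" using nz by (metis vec_eq_iff zero_index)
  then have "f j \<noteq> 0" using xf by auto
  then have "0 < (f j)^2" by simp
  moreover have "(f j)^2 \<le> (\<Sum>i\<in>UNIV. (f i)^2)"
    by (rule member_le_sum) auto
  ultimately have "0 < (\<Sum>i\<in>UNIV. (f i)^2)" by linarith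
  then have "2 \<le> (\<Sum>i\<in>UNIV. (f i)^2)" using evs by presburger
  then have "2 \<le> real_of_int (\<Sum>i\<in>UNIV. (f i)^2)" by linarith
  then show ?thesis unfolding nsq using xf by simp
qed

lemma min_norm_eq:
  fixes L :: "'a::euclidean_space set"
  assumes lb: "\<And>x. x \<in> L \<Longrightarrow> x \<noteq> 0 \<Longrightarrow> 2 \<le> norm x ^ 2"
    and v: "v \<in> L" "v \<noteq> 0" "norm v ^ 2 = 2"
  shows "min_norm L = sqrt 2"
  unfolding min_norm_def
proof (rule cInf_eq_minimum)
  have "norm v = sqrt 2" using v(3) by (metis norm_ge_zero real_sqrt_unique)
  then show "sqrt 2 \<in> {norm x |x. x \<in> L \<and> x \<noteq> 0}" using v by (auto intro!: exI[of _ v])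
next
  fix y assume "y \<in> {norm x |x. x \<in> L \<and> x \<noteq> 0}"
  then obtain x where x: "x \<in> L" "x \<noteq> 0" "y = norm x" by blast
  have "sqrt 2 \<le> sqrt (norm x ^ 2)" using lb[OF x(1,2)] by (rule real_sqrt_le_mono)
  then show "sqrt 2 \<le> y" using x(3) by simp
qed

lemma N_set_elem:
  fixes L :: "'a::euclidean_space set"
  assumes "min_norm L = sqrt 2" "n \<in> N_set L"
  shows "\<exists>x\<in>L. x \<noteq> 0 \<and> n = (norm x / sqrt 2) ^ dim L"
proof -
  obtain z where z: "n = norm z ^ dim L" "z \<in> normalized_lat L" "z \<noteq> 0"
    using assms(2) unfolding N_set_def by blast
  obtain x where x: "x \<in> L" "z = (1 / sqrt 2) *\<^sub>R x" using z(2) assms(1) unfolding normalized_lat_def by auto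
  have "x \<noteq> 0" using x z(3) by auto
  moreover have "norm z = norm x / sqrt 2" using x(2) by simp
  ultimately show ?thesis using x z by auto
qed

lemma pow4_sq: "(a / sqrt 2) ^ 4 = (a^2 / 2)^2"
proof -
  have "(a / sqrt 2) ^ 4 = ((a / sqrt 2)^2)^2" by simp
  also have "(a / sqrt 2)^2 = a^2 / 2" by (simp add: power_divide)
  finally show ?thesis .
qed

lemma pow8_sq: "(a / sqrt 2) ^ 8 = (a^2 / 2)^4"
proof -
  have "(a / sqrt 2) ^ 8 = ((a / sqrt 2)^2)^4" by (simp flip: power_mult)
  also have "(a / sqrt 2)^2 = a^2 / 2" by (simp add: power_divide)
  finally show ?thesis .
qed

lemma full_rank_code:
  fixes L :: "(real^'n::{finite,wellorder}) set" and S B Binv :: "real^'n::_ \<Rightarrow> real^'n::_"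
  assumes linS: "linear S" and linB: "linear B" and linBi: "linear Binv"
    and BiB: "\<And>x. Binv (B x) = x" and BBi: "\<And>x. B (Binv x) = x"
    and LB: "L = B ` Zv" and SL: "S ` L \<subseteq> L" and spanL: "span L = UNIV"
    and k: "k > 0" and nrm: "\<And>x. norm (S x)^2 = k * norm x^2"
  shows "has_lattice_code_of_size L \<bar>det (matrix S)\<bar>" "det (matrix S) ^ 2 = k ^ CARD('n)"
proof -
  note sg = sim_generic[OF linS k nrm]
  show det2: "det (matrix S) ^ 2 = k ^ CARD('n)" by (rule sg(5))
  have dS: "det (matrix S) \<noteq> 0"
  proof
    assume "det (matrix S) = 0"
    then have "k ^ CARD('n) = 0" using det2 by simp
    then show False using k by simp
  qed
  have injB: "inj B" by (metis BiB injI)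
  define G where "G = Binv \<circ> S \<circ> B"
  have linG: "linear G" unfolding G_def using linS linB linBi by (intro linear_compose)
  have comm: "S (B z) = B (G z)" for z by (simp add: G_def BBi)
  have GZ: "G ` Zv \<subseteq> Zv"
  proof
    fix y assume "y \<in> G ` Zv"
    then obtain z where z: "z \<in> Zv" "y = G z" by blast
    have "S (B z) \<in> L" using SL LB z(1) by blast
    then obtain z' where "z' \<in> Zv" "S (B z) = B z'" using LB by blast
    then show "y \<in> Zv" using z BiB by (simp add: G_def)
  qed
  have "matrix G = matrix Binv ** (matrix S ** matrix B)"
    unfolding G_def using matrix_compose[OF linB linS] matrix_compose[OF linear_compose[OF linB linS] linBi]
    by (simp add: o_assoc)
  then have "det (matrix G) = det (matrix Binv) * (det (matrix S) * det (matrix B))"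
    by (simp add: det_mul)
  moreover have "det (matrix Binv) * det (matrix B) = 1"
  proof -
    have "Binv \<circ> B = id" using BiB by (simp add: fun_eq_iff)
    then have "matrix Binv ** matrix B = matrix id" using matrix_compose[OF linB linBi] by simp
    then have "det (matrix Binv ** matrix B) = 1" by simp
    then show ?thesis by (simp add: det_mul)
  qed
  ultimately have detG: "det (matrix G) = det (matrix S)" by (simp add: algebra_simps)
  have idx: "real (lattice_index L (S ` L)) = \<bar>det (matrix S)\<bar>"
    using index_basis[OF linB injB linG comm GZ] detG dS LB by simp
  show "has_lattice_code_of_size L \<bar>det (matrix S)\<bar>"
  proof (rule code_from_sim[OF linS sg(1) SL])
    show "(\<lambda>x. (1 / k) *\<^sub>R adjoint S x) ` span L \<subseteq> span L" using spanL by simp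
    show "S ((1 / k) *\<^sub>R adjoint S x) = x" for x using sg(3) by simp
    show "(1 / k) *\<^sub>R adjoint S (S x) = x" for x using sg(2) by simp
    show "0 < 1 / sqrt k" using k by simp
    show "norm ((1 / k) *\<^sub>R adjoint S x) = (1 / sqrt k) * norm x" for x using sg(4) by simp
  qed (rule idx)
qed

lemma span_univ_axis:
  fixes L :: "(real^'n) set"
  assumes "\<And>i. \<exists>c. c \<noteq> 0 \<and> c *\<^sub>R axis i 1 \<in> L"
  shows "span L = UNIV"
proof -
  have "axis i 1 \<in> span L" for i
  proof -
    obtain c where c: "c \<noteq> 0" "c *\<^sub>R axis i 1 \<in> L" using assms by blast
    then have "(1/c) *\<^sub>R (c *\<^sub>R axis i 1) \<in> span L" by (intro span_mul span_base)
    then show ?thesis using c by simp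
  qed
  then have "Basis \<subseteq> span L" by (auto simp: Basis_vec_def)
  then have "span Basis \<subseteq> span L" by (metis span_mono span_span)
  then show ?thesis by (simp add: span_Basis top_le)
qed

lemma dim_univ:
  assumes "span (L :: (real^'n) set) = UNIV" shows "dim L = CARD('n)"
proof -
  have "dim L = dim (span L)" by (simp add: dim_span)
  also have "\<dots> = dim (UNIV :: (real^'n) set)" using assms by simp
  also have "\<dots> = CARD('n)" by simp
  finally show ?thesis .
qed

lemma int_vec:
  assumes h: "\<forall>i. (x::real^'n)$i \<in> \<int>" shows "\<exists>m. \<forall>i. x$i = of_int (m i)"
proof -
  have "x$i = of_int \<lfloor>x$i\<rfloor>" for i using h[rule_format, of i] by (auto elim!: Ints_cases)
  then show ?thesis by (intro exI[of _ "\<lambda>i. \<lfloor>x$i\<rfloor>"]) auto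
qed

lemma v4:
  "(vector [p,q,r,s] :: 'a::zero^4) $ 1 = p" "(vector [p,q,r,s] :: 'a::zero^4) $ 2 = q"
  "(vector [p,q,r,s] :: 'a::zero^4) $ 3 = r" "(vector [p,q,r,s] :: 'a::zero^4) $ 4 = s"
  unfolding vector_def by simp_all

definition qmat :: "real^4 \<Rightarrow> real^4^4" where
  "qmat a = vector [vector [a$1, -a$2, -a$3, -a$4], vector [a$2, a$1, -a$4, a$3],
                    vector [a$3, a$4, a$1, -a$2], vector [a$4, -a$3, a$2, a$1]]"

lemma qcomp:
  "(qmat a *v x)$1 = a$1*x$1 - a$2*x$2 - a$3*x$3 - a$4*x$4"
  "(qmat a *v x)$2 = a$2*x$1 + a$1*x$2 - a$4*x$3 + a$3*x$4"
  "(qmat a *v x)$3 = a$3*x$1 + a$4*x$2 + a$1*x$3 - a$2*x$4"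
  "(qmat a *v x)$4 = a$4*x$1 - a$3*x$2 + a$2*x$3 + a$1*x$4"
  by (simp_all add: qmat_def matrix_vector_mult_def sum_4 v4)

lemma q_norm: "norm (qmat a *v x)^2 = norm a ^ 2 * norm x ^ 2"
  unfolding nsq sum_4 qcomp by algebra

lemma D4_mem: "x \<in> D4_lat \<longleftrightarrow> (\<forall>i. x$i \<in> \<int>) \<and> (\<exists>k::int. x$1 + x$2 + x$3 + x$4 = 2 * of_int k)"
  by (simp add: D4_lat_def sum_4)

lemma D4_S:
  assumes a: "\<forall>i. a$i \<in> \<int>" and x: "x \<in> D4_lat"
  shows "qmat a *v x \<in> D4_lat"
proof -
  obtain A where A: "\<forall>i. a$i = of_int (A i)" using int_vec[OF a] by blast
  have xi: "\<forall>i. x$i \<in> \<int>" using x unfolding D4_mem by blast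
  obtain m where m: "\<forall>i. x$i = of_int (m i)" using int_vec[OF xi] by blast
  obtain k where k: "x$1 + x$2 + x$3 + x$4 = 2 * of_int k" using x unfolding D4_mem by blast
  have "real_of_int (m 1 + m 2 + m 3 + m 4) = real_of_int (2 * k)" using k m by simp
  then have m1: "m 1 = 2 * k - m 2 - m 3 - m 4" by linarith
  show ?thesis unfolding D4_mem
  proof (intro conjI allI exI)
    show "(qmat a *v x)$i \<in> \<int>" for i
      using exhaust_4[of i] by (auto simp: qcomp A m)
    show "(qmat a *v x)$1 + (qmat a *v x)$2 + (qmat a *v x)$3 + (qmat a *v x)$4 =
      2 * of_int ((A 1 + A 2 + A 3 + A 4) * k - (A 2 + A 3) * m 2 - (A 3 + A 4) * m 3 - (A 2 + A 4) * m 4)"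
      by (simp add: qcomp A m m1 algebra_simps)
  qed
qed

definition bmat4 :: "real^4^4" where
  "bmat4 = vector [vector [1,0,0,0], vector [-1,1,0,0], vector [0,-1,1,1], vector [0,0,-1,1]]"
definition bimat4 :: "real^4^4" where
  "bimat4 = vector [vector [1,0,0,0], vector [1,1,0,0], vector [1/2,1/2,1/2,-1/2], vector [1/2,1/2,1/2,1/2]]"

lemma bcomp4:
  "(bmat4 *v z)$1 = z$1" "(bmat4 *v z)$2 = z$2 - z$1" "(bmat4 *v z)$3 = z$3 + z$4 - z$2"
  "(bmat4 *v z)$4 = z$4 - z$3"
  by (simp_all add: bmat4_def matrix_vector_mult_def sum_4 v4)

lemma bicomp4:
  "(bimat4 *v z)$1 = z$1" "(bimat4 *v z)$2 = z$1 + z$2" "(bimat4 *v z)$3 = (z$1 + z$2 + z$3 - z$4) / 2"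
  "(bimat4 *v z)$4 = (z$1 + z$2 + z$3 + z$4) / 2"
  by (simp_all add: bimat4_def matrix_vector_mult_def sum_4 v4 field_simps)

lemma BiB4: "bimat4 *v (bmat4 *v z) = z"
  by (simp add: vec_eq_iff forall_4 bcomp4 bicomp4 field_simps)

lemma BBi4: "bmat4 *v (bimat4 *v z) = z"
  by (simp add: vec_eq_iff forall_4 bcomp4 bicomp4 field_simps)

lemma D4_basis: "D4_lat = (\<lambda>z. bmat4 *v z) ` Zv"
proof (intro equalityI subsetI)
  fix x assume x: "x \<in> D4_lat"
  have xi: "\<forall>i. x$i \<in> \<int>" using x unfolding D4_mem by blast
  obtain m where m: "\<forall>i. x$i = of_int (m i)" using int_vec[OF xi] by blast
  obtain k where k: "x$1 + x$2 + x$3 + x$4 = 2 * of_int k" using x unfolding D4_mem by blast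
  have "bimat4 *v x \<in> Zv"
  proof -
    have h3: "(bimat4 *v x)$3 = of_int (k - m 4)" using k m by (simp add: bicomp4 field_simps)
    have h4: "(bimat4 *v x)$4 = of_int k" using k m by (simp add: bicomp4 field_simps)
    have "(bimat4 *v x)$i \<in> \<int>" for i using exhaust_4[of i] h3 h4 by (auto simp: bicomp4(1,2) m)
    then show ?thesis unfolding Zv_def by blast
  qed
  then show "x \<in> (\<lambda>z. bmat4 *v z) ` Zv" using BBi4[of x] by (metis image_eqI)
next
  fix x assume "x \<in> (\<lambda>z. bmat4 *v z) ` Zv"
  then obtain z where z: "z \<in> Zv" "x = bmat4 *v z" by blast
  obtain m where m: "\<forall>i. z$i = of_int (m i)" using z(1) int_vec unfolding Zv_def by blast
  show "x \<in> D4_lat" unfolding D4_mem z(2)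
  proof (intro conjI allI exI)
    show "(bmat4 *v z)$i \<in> \<int>" for i using exhaust_4[of i] by (auto simp: bcomp4 m)
    show "(bmat4 *v z)$1 + (bmat4 *v z)$2 + (bmat4 *v z)$3 + (bmat4 *v z)$4 = 2 * of_int (m 4)"
      by (simp add: bcomp4 m)
  qed
qed

lemma sq_abs_eq: "d ^ 2 = (kk::real) ^ 4 \<Longrightarrow> \<bar>d\<bar> = kk ^ 2"
proof -
  assume h: "d ^ 2 = kk ^ 4"
  have "\<bar>d\<bar> = sqrt (d ^ 2)" by simp
  also have "\<dots> = sqrt ((kk ^ 2) ^ 2)"
  proof -
    have e: "kk ^ 4 = (kk ^ 2) ^ 2" by (simp flip: power_mult)
    show ?thesis by (simp only: h e)
  qed
  also have "\<dots> = kk ^ 2" by (simp only: real_sqrt_abs abs_power2)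
  finally show ?thesis .
qed

lemma D4_main: "\<forall>n\<in>N_set D4_lat. has_lattice_code_of_size D4_lat n"
proof
  fix n assume n: "n \<in> N_set D4_lat"
  have lb: "2 \<le> norm x ^ 2" if "x \<in> D4_lat" "x \<noteq> 0" for x
    using that unfolding D4_lat_def by (intro even_int_vec_ge2) auto
  define v :: "real^4" where "v = vector [1,1,0,0]"
  have vc: "v$1 = 1" "v$2 = 1" "v$3 = 0" "v$4 = 0" by (simp_all add: v_def v4)
  have v: "v \<in> D4_lat" "v \<noteq> 0" "norm v ^ 2 = 2"
  proof -
    show "v \<in> D4_lat" unfolding D4_mem
    proof (intro conjI allI exI)
      show "v $ i \<in> \<int>" for i using exhaust_4[of i] vc by auto
      show "v $ 1 + v $ 2 + v $ 3 + v $ 4 = 2 * of_int 1" using vc by simp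
    qed
    show "v \<noteq> 0" using vc(1) by (metis zero_index zero_neq_one)
    show "norm v ^ 2 = 2" by (simp add: nsq sum_4 vc)
  qed
  have mn: "min_norm D4_lat = sqrt 2" by (rule min_norm_eq[OF lb v])
  have span: "span D4_lat = UNIV"
  proof (rule span_univ_axis)
    fix i :: 4
    have "(2::real) *\<^sub>R axis i 1 \<in> D4_lat" unfolding D4_lat_def
    proof (intro CollectI conjI allI exI)
      show "(2 *\<^sub>R axis i (1::real)) $ j \<in> \<int>" for j by (simp add: axis_def real_scaleR_def)
      show "(\<Sum>j\<in>UNIV. (2 *\<^sub>R axis i (1::real)) $ j) = 2 * of_int 1" by (simp add: axis_def real_scaleR_def sum.delta sum.delta' flip: sum_distrib_left)
    qed
    then show "\<exists>c. c \<noteq> 0 \<and> c *\<^sub>R axis i 1 \<in> D4_lat" by (intro exI[of _ 2]) simp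
  qed
  have dim: "dim D4_lat = 4" using dim_univ[OF span] by simp
  obtain x where x: "x \<in> D4_lat" "x \<noteq> 0" "n = (norm x / sqrt 2)^4"
    using N_set_elem[OF mn n] dim by auto
  define kk where "kk = norm x ^ 2 / 2"
  have n2: "n = kk^2" by (simp only: x(3) pow4_sq kk_def)
  have kpos: "kk > 0" unfolding kk_def using x(2) by simp
  have xi: "\<forall>i. x$i \<in> \<int>" using x(1) unfolding D4_mem by blast
  obtain m where m: "\<forall>i. x$i = of_int (m i)" using int_vec[OF xi] by blast
  obtain k where k: "(\<Sum>i\<in>UNIV. x$i) = 2 * of_int k" using x(1) unfolding D4_lat_def by blast
  have "real_of_int (\<Sum>i\<in>UNIV. m i) = real_of_int (2 * k)" using k m by simp
  then have "(\<Sum>i\<in>UNIV. m i) = 2 * k" by linarith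
  then have "even (\<Sum>i\<in>UNIV. m i)" by simp
  then obtain g :: "4 \<Rightarrow> int" where g: "2 * (\<Sum>i\<in>UNIV. (g i)^2) = (\<Sum>i\<in>(UNIV::4 set). (m i)^2)"
    using halve_sq[of "UNIV::4 set" m] by auto
  define a :: "real^4" where "a = (\<chi> i. of_int (g i))"
  have aint: "\<forall>i. a$i \<in> \<int>" by (simp add: a_def)
  have "norm a ^ 2 = real_of_int (\<Sum>i\<in>UNIV. (g i)^2)" by (simp add: nsq a_def)
  moreover have "norm x ^ 2 = real_of_int (\<Sum>i\<in>UNIV. (m i)^2)" by (simp add: nsq m)
  ultimately have na: "norm a ^ 2 = kk" unfolding kk_def using g
    by (metis (mono_tags, lifting) nonzero_mult_div_cancel_left of_int_mult of_int_numeral zero_neq_numeral)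
  define S where "S = (\<lambda>y. qmat a *v y)"
  have linS: "linear S" unfolding S_def by simp
  have nrm: "norm (S y)^2 = kk * norm y^2" for y using q_norm na S_def by simp
  have SL: "S ` D4_lat \<subseteq> D4_lat" using D4_S aint S_def by auto
  have linB: "linear (\<lambda>z. bmat4 *v z)" by simp
  have linBi: "linear (\<lambda>z. bimat4 *v z)" by simp
  note fr = full_rank_code[OF linS linB linBi BiB4 BBi4 D4_basis SL span kpos nrm]
  have "\<bar>det (matrix S)\<bar> = kk ^ 2" using fr(2) by (intro sq_abs_eq) simp
  then show "has_lattice_code_of_size D4_lat n" using fr(1) n2 by simp
qed

lemma exhaust_8:
  fixes x :: 8
  shows "x = 1 \<or> x = 2 \<or> x = 3 \<or> x = 4 \<or> x = 5 \<or> x = 6 \<or> x = 7 \<or> x = 8"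
proof (induct x)
  case (of_int z)
  then have "z = 0 \<or> z = 1 \<or> z = 2 \<or> z = 3 \<or> z = 4 \<or> z = 5 \<or> z = 6 \<or> z = 7" by fastforce
  then show ?case by auto
qed
lemma UNIV_8: "UNIV = {1, 2, 3, 4, 5, 6, 7, 8::8}"
  using exhaust_8 by auto
lemma sum_8: "sum f (UNIV::8 set) = f 1 + f 2 + f 3 + f 4 + f 5 + f 6 + f 7 + f 8"
  unfolding UNIV_8 by (simp add: ac_simps)
lemma forall_8: "(\<forall>i::8. P i) \<longleftrightarrow> P 1 \<and> P 2 \<and> P 3 \<and> P 4 \<and> P 5 \<and> P 6 \<and> P 7 \<and> P 8"
  by (metis exhaust_8)
lemma v8:
  "(vector [p1,p2,p3,p4,p5,p6,p7,p8] :: 'a::zero^8) $ 1 = p1"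
  "(vector [p1,p2,p3,p4,p5,p6,p7,p8] :: 'a::zero^8) $ 2 = p2"
  "(vector [p1,p2,p3,p4,p5,p6,p7,p8] :: 'a::zero^8) $ 3 = p3"
  "(vector [p1,p2,p3,p4,p5,p6,p7,p8] :: 'a::zero^8) $ 4 = p4"
  "(vector [p1,p2,p3,p4,p5,p6,p7,p8] :: 'a::zero^8) $ 5 = p5"
  "(vector [p1,p2,p3,p4,p5,p6,p7,p8] :: 'a::zero^8) $ 6 = p6"
  "(vector [p1,p2,p3,p4,p5,p6,p7,p8] :: 'a::zero^8) $ 7 = p7"
  "(vector [p1,p2,p3,p4,p5,p6,p7,p8] :: 'a::zero^8) $ 8 = p8"
  unfolding vector_def by simp_all

definition omat :: "real^8 \<Rightarrow> real^8^8" where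
  "omat a = vector [vector [a$1, -a$2, -a$3, -a$4, -a$5, -a$6, -a$7, -a$8],
    vector [a$2, a$1, -a$4, a$3, -a$6, a$5, a$8, -a$7],
    vector [a$3, a$4, a$1, -a$2, -a$7, -a$8, a$5, a$6],
    vector [a$4, -a$3, a$2, a$1, -a$8, a$7, -a$6, a$5],
    vector [a$5, a$6, a$7, a$8, a$1, -a$2, -a$3, -a$4],
    vector [a$6, -a$5, a$8, -a$7, a$2, a$1, a$4, -a$3],
    vector [a$7, -a$8, -a$5, a$6, a$3, -a$4, a$1, a$2],
    vector [a$8, a$7, -a$6, -a$5, a$4, a$3, -a$2, a$1]]"

lemma ocomp:
  "(omat a *v x)$1 = a$1 * x$1 - a$2 * x$2 - a$3 * x$3 - a$4 * x$4 - a$5 * x$5 - a$6 * x$6 - a$7 * x$7 - a$8 * x$8"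
  "(omat a *v x)$2 = a$2 * x$1 + a$1 * x$2 - a$4 * x$3 + a$3 * x$4 - a$6 * x$5 + a$5 * x$6 + a$8 * x$7 - a$7 * x$8"
  "(omat a *v x)$3 = a$3 * x$1 + a$4 * x$2 + a$1 * x$3 - a$2 * x$4 - a$7 * x$5 - a$8 * x$6 + a$5 * x$7 + a$6 * x$8"
  "(omat a *v x)$4 = a$4 * x$1 - a$3 * x$2 + a$2 * x$3 + a$1 * x$4 - a$8 * x$5 + a$7 * x$6 - a$6 * x$7 + a$5 * x$8"
  "(omat a *v x)$5 = a$5 * x$1 + a$6 * x$2 + a$7 * x$3 + a$8 * x$4 + a$1 * x$5 - a$2 * x$6 - a$3 * x$7 - a$4 * x$8"
  "(omat a *v x)$6 = a$6 * x$1 - a$5 * x$2 + a$8 * x$3 - a$7 * x$4 + a$2 * x$5 + a$1 * x$6 + a$4 * x$7 - a$3 * x$8"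
  "(omat a *v x)$7 = a$7 * x$1 - a$8 * x$2 - a$5 * x$3 + a$6 * x$4 + a$3 * x$5 - a$4 * x$6 + a$1 * x$7 + a$2 * x$8"
  "(omat a *v x)$8 = a$8 * x$1 + a$7 * x$2 - a$6 * x$3 - a$5 * x$4 + a$4 * x$5 + a$3 * x$6 - a$2 * x$7 + a$1 * x$8"
  by (simp_all add: omat_def matrix_vector_mult_def sum_8 v8)

lemma o_norm: "norm (omat a *v x)^2 = norm a ^ 2 * norm x ^ 2"
  unfolding nsq sum_8 ocomp by algebra

lemma E8_mem: "x \<in> E8_lat \<longleftrightarrow> ((\<forall>i. x$i \<in> \<int>) \<or> (\<forall>i. x$i - 1/2 \<in> \<int>)) \<and> (\<exists>k::int. x$1 + x$2 + x$3 + x$4 + x$5 + x$6 + x$7 + x$8 = 2 * of_int k)"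
  by (simp add: E8_lat_def sum_8)

lemma E8_S:
  assumes a: "\<forall>i. a$i \<in> \<int>" and x: "x \<in> E8_lat"
  shows "omat a *v x \<in> E8_lat"
proof -
  obtain A where A: "\<forall>i. a$i = of_int (A i)" using int_vec[OF a] by blast
  obtain k where k: "x$1 + x$2 + x$3 + x$4 + x$5 + x$6 + x$7 + x$8 = 2 * of_int k" using x unfolding E8_mem by blast
  define s where "s = A 1 + A 2 + A 3 + A 4 + A 5 + A 6 + A 7 + A 8"
  have "(\<forall>i. x$i \<in> \<int>) \<or> (\<forall>i. x$i - 1/2 \<in> \<int>)" using x unfolding E8_mem by blast
  then show ?thesis
  proof
    assume xi: "\<forall>i. x$i \<in> \<int>"
    obtain m where m: "\<forall>i. x$i = of_int (m i)" using int_vec[OF xi] by blast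
    have "real_of_int (m 1 + m 2 + m 3 + m 4 + m 5 + m 6 + m 7 + m 8) = real_of_int (2 * k)" using k m by simp
    then have m1: "m 1 = 2 * k - m 2 - m 3 - m 4 - m 5 - m 6 - m 7 - m 8" by linarith
    show ?thesis unfolding E8_mem
    proof (intro conjI disjI1 allI exI)
      show "(omat a *v x)$i \<in> \<int>" for i using exhaust_8[of i] by (auto simp: ocomp A m)
      show "(omat a *v x)$1 + (omat a *v x)$2 + (omat a *v x)$3 + (omat a *v x)$4 + (omat a *v x)$5 + (omat a *v x)$6 + (omat a *v x)$7 + (omat a *v x)$8 = 2 * of_int (s * k - ((A 2 + A 3 + A 5 + A 8) * m 2 + (A 3 + A 4 + A 5 + A 6) * m 3 + (A 4 + A 2 + A 7 + A 5) * m 4 + (A 5 + A 6 + A 7 + A 8) * m 5 + (A 6 + A 8 + A 2 + A 4) * m 6 + (A 7 + A 6 + A 3 + A 2) * m 7 + (A 8 + A 7 + A 4 + A 3) * m 8))"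
        by (simp add: ocomp A m m1 s_def algebra_simps)
    qed
  next
    assume xh: "\<forall>i. x$i - 1/2 \<in> \<int>"
    have "\<forall>i. (x - (\<chi> i. 1/2))$i \<in> \<int>" using xh by simp
    then obtain m0 where m0: "\<forall>i. (x - (\<chi> i. 1/2))$i = of_int (m0 i)" using int_vec by blast
    define m where "m = m0"
    have m: "\<forall>i. x$i = of_int (m i) + 1/2" using m0 unfolding m_def by (simp add: algebra_simps)
    have "real_of_int (m 1 + m 2 + m 3 + m 4 + m 5 + m 6 + m 7 + m 8 + 4) = real_of_int (2 * k)" using k m by simp
    then have m1: "m 1 = 2 * k - 4 - m 2 - m 3 - m 4 - m 5 - m 6 - m 7 - m 8" by linarith
    have sumS: "(omat a *v x)$1 + (omat a *v x)$2 + (omat a *v x)$3 + (omat a *v x)$4 + (omat a *v x)$5 + (omat a *v x)$6 + (omat a *v x)$7 + (omat a *v x)$8 = 2 * of_int (s * (k - 2) - ((A 2 + A 3 + A 5 + A 8) * m 2 + (A 3 + A 4 + A 5 + A 6) * m 3 + (A 4 + A 2 + A 7 + A 5) * m 4 + (A 5 + A 6 + A 7 + A 8) * m 5 + (A 6 + A 8 + A 2 + A 4) * m 6 + (A 7 + A 6 + A 3 + A 2) * m 7 + (A 8 + A 7 + A 4 + A 3) * m 8) + 2 * A 1)"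
      by (simp add: ocomp A m m1 s_def algebra_simps)
    obtain t where "s = 2 * t \<or> s = 2 * t + 1" by (metis evenE oddE)
    then show ?thesis
    proof
      assume st: "s = 2 * t"
      then have A1: "A 1 = 2 * t - A 2 - A 3 - A 4 - A 5 - A 6 - A 7 - A 8" unfolding s_def by simp

      have c1: "(omat a *v x)$1 = of_int (A 1 * m 1 - A 2 * m 2 - A 3 * m 3 - A 4 * m 4 - A 5 * m 5 - A 6 * m 6 - A 7 * m 7 - A 8 * m 8 + t - (A 2 + A 3 + A 4 + A 5 + A 6 + A 7 + A 8))" by (simp add: ocomp A m A1 algebra_simps)
      have c2: "(omat a *v x)$2 = of_int (A 2 * m 1 + A 1 * m 2 - A 4 * m 3 + A 3 * m 4 - A 6 * m 5 + A 5 * m 6 + A 8 * m 7 - A 7 * m 8 + t - (A 4 + A 6 + A 7))" by (simp add: ocomp A m A1 algebra_simps)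
      have c3: "(omat a *v x)$3 = of_int (A 3 * m 1 + A 4 * m 2 + A 1 * m 3 - A 2 * m 4 - A 7 * m 5 - A 8 * m 6 + A 5 * m 7 + A 6 * m 8 + t - (A 2 + A 7 + A 8))" by (simp add: ocomp A m A1 algebra_simps)
      have c4: "(omat a *v x)$4 = of_int (A 4 * m 1 - A 3 * m 2 + A 2 * m 3 + A 1 * m 4 - A 8 * m 5 + A 7 * m 6 - A 6 * m 7 + A 5 * m 8 + t - (A 3 + A 8 + A 6))" by (simp add: ocomp A m A1 algebra_simps)
      have c5: "(omat a *v x)$5 = of_int (A 5 * m 1 + A 6 * m 2 + A 7 * m 3 + A 8 * m 4 + A 1 * m 5 - A 2 * m 6 - A 3 * m 7 - A 4 * m 8 + t - (A 2 + A 3 + A 4))" by (simp add: ocomp A m A1 algebra_simps)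
      have c6: "(omat a *v x)$6 = of_int (A 6 * m 1 - A 5 * m 2 + A 8 * m 3 - A 7 * m 4 + A 2 * m 5 + A 1 * m 6 + A 4 * m 7 - A 3 * m 8 + t - (A 5 + A 7 + A 3))" by (simp add: ocomp A m A1 algebra_simps)
      have c7: "(omat a *v x)$7 = of_int (A 7 * m 1 - A 8 * m 2 - A 5 * m 3 + A 6 * m 4 + A 3 * m 5 - A 4 * m 6 + A 1 * m 7 + A 2 * m 8 + t - (A 8 + A 5 + A 4))" by (simp add: ocomp A m A1 algebra_simps)
      have c8: "(omat a *v x)$8 = of_int (A 8 * m 1 + A 7 * m 2 - A 6 * m 3 - A 5 * m 4 + A 4 * m 5 + A 3 * m 6 - A 2 * m 7 + A 1 * m 8 + t - (A 6 + A 5 + A 2))" by (simp add: ocomp A m A1 algebra_simps)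
      have "(omat a *v x)$i \<in> \<int>" for i using exhaust_8[of i] c1 c2 c3 c4 c5 c6 c7 c8 by auto
      then show ?thesis unfolding E8_mem using sumS by blast
    next
      assume st: "s = 2 * t + 1"
      then have A1: "A 1 = 2 * t + 1 - A 2 - A 3 - A 4 - A 5 - A 6 - A 7 - A 8" unfolding s_def by simp
      have c1: "(omat a *v x)$1 - 1/2 = of_int (A 1 * m 1 - A 2 * m 2 - A 3 * m 3 - A 4 * m 4 - A 5 * m 5 - A 6 * m 6 - A 7 * m 7 - A 8 * m 8 + t - (A 2 + A 3 + A 4 + A 5 + A 6 + A 7 + A 8))" by (simp add: ocomp A m A1 algebra_simps)
      have c2: "(omat a *v x)$2 - 1/2 = of_int (A 2 * m 1 + A 1 * m 2 - A 4 * m 3 + A 3 * m 4 - A 6 * m 5 + A 5 * m 6 + A 8 * m 7 - A 7 * m 8 + t - (A 4 + A 6 + A 7))" by (simp add: ocomp A m A1 algebra_simps)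
      have c3: "(omat a *v x)$3 - 1/2 = of_int (A 3 * m 1 + A 4 * m 2 + A 1 * m 3 - A 2 * m 4 - A 7 * m 5 - A 8 * m 6 + A 5 * m 7 + A 6 * m 8 + t - (A 2 + A 7 + A 8))" by (simp add: ocomp A m A1 algebra_simps)
      have c4: "(omat a *v x)$4 - 1/2 = of_int (A 4 * m 1 - A 3 * m 2 + A 2 * m 3 + A 1 * m 4 - A 8 * m 5 + A 7 * m 6 - A 6 * m 7 + A 5 * m 8 + t - (A 3 + A 8 + A 6))" by (simp add: ocomp A m A1 algebra_simps)
      have c5: "(omat a *v x)$5 - 1/2 = of_int (A 5 * m 1 + A 6 * m 2 + A 7 * m 3 + A 8 * m 4 + A 1 * m 5 - A 2 * m 6 - A 3 * m 7 - A 4 * m 8 + t - (A 2 + A 3 + A 4))" by (simp add: ocomp A m A1 algebra_simps)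
      have c6: "(omat a *v x)$6 - 1/2 = of_int (A 6 * m 1 - A 5 * m 2 + A 8 * m 3 - A 7 * m 4 + A 2 * m 5 + A 1 * m 6 + A 4 * m 7 - A 3 * m 8 + t - (A 5 + A 7 + A 3))" by (simp add: ocomp A m A1 algebra_simps)
      have c7: "(omat a *v x)$7 - 1/2 = of_int (A 7 * m 1 - A 8 * m 2 - A 5 * m 3 + A 6 * m 4 + A 3 * m 5 - A 4 * m 6 + A 1 * m 7 + A 2 * m 8 + t - (A 8 + A 5 + A 4))" by (simp add: ocomp A m A1 algebra_simps)
      have c8: "(omat a *v x)$8 - 1/2 = of_int (A 8 * m 1 + A 7 * m 2 - A 6 * m 3 - A 5 * m 4 + A 4 * m 5 + A 3 * m 6 - A 2 * m 7 + A 1 * m 8 + t - (A 6 + A 5 + A 2))" by (simp add: ocomp A m A1 algebra_simps)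
      have "(omat a *v x)$i - 1/2 \<in> \<int>" for i using exhaust_8[of i] c1 c2 c3 c4 c5 c6 c7 c8 by auto
      then show ?thesis unfolding E8_mem using sumS by blast
    qed
  qed
qed

definition bmat8 :: "real^8^8" where
  "bmat8 = vector [vector [2, -1, 0, 0, 0, 0, 0, 1/2],
    vector [0, 1, -1, 0, 0, 0, 0, 1/2],
    vector [0, 0, 1, -1, 0, 0, 0, 1/2],
    vector [0, 0, 0, 1, -1, 0, 0, 1/2],
    vector [0, 0, 0, 0, 1, -1, 0, 1/2],
    vector [0, 0, 0, 0, 0, 1, -1, 1/2],
    vector [0, 0, 0, 0, 0, 0, 1, 1/2],
    vector [0, 0, 0, 0, 0, 0, 0, 1/2]]"

definition bimat8 :: "real^8^8" where
  "bimat8 = vector [vector [1/2, 1/2, 1/2, 1/2, 1/2, 1/2, 1/2, -7/2],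
    vector [0, 1, 1, 1, 1, 1, 1, -6],
    vector [0, 0, 1, 1, 1, 1, 1, -5],
    vector [0, 0, 0, 1, 1, 1, 1, -4],
    vector [0, 0, 0, 0, 1, 1, 1, -3],
    vector [0, 0, 0, 0, 0, 1, 1, -2],
    vector [0, 0, 0, 0, 0, 0, 1, -1],
    vector [0, 0, 0, 0, 0, 0, 0, 2]]"

lemma bcomp8:
  "(bmat8 *v z)$1 = 2 * z$1 - z$2 + 1/2 * z$8"
  "(bmat8 *v z)$2 = z$2 - z$3 + 1/2 * z$8"
  "(bmat8 *v z)$3 = z$3 - z$4 + 1/2 * z$8"
  "(bmat8 *v z)$4 = z$4 - z$5 + 1/2 * z$8"
  "(bmat8 *v z)$5 = z$5 - z$6 + 1/2 * z$8"
  "(bmat8 *v z)$6 = z$6 - z$7 + 1/2 * z$8"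
  "(bmat8 *v z)$7 = z$7 + 1/2 * z$8"
  "(bmat8 *v z)$8 = 1/2 * z$8"
  by (simp_all add: bmat8_def matrix_vector_mult_def sum_8 v8)

lemma bicomp8:
  "(bimat8 *v z)$1 = 1/2 * z$1 + 1/2 * z$2 + 1/2 * z$3 + 1/2 * z$4 + 1/2 * z$5 + 1/2 * z$6 + 1/2 * z$7 - 7/2 * z$8"
  "(bimat8 *v z)$2 = z$2 + z$3 + z$4 + z$5 + z$6 + z$7 - 6 * z$8"
  "(bimat8 *v z)$3 = z$3 + z$4 + z$5 + z$6 + z$7 - 5 * z$8"
  "(bimat8 *v z)$4 = z$4 + z$5 + z$6 + z$7 - 4 * z$8"
  "(bimat8 *v z)$5 = z$5 + z$6 + z$7 - 3 * z$8"
  "(bimat8 *v z)$6 = z$6 + z$7 - 2 * z$8"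
  "(bimat8 *v z)$7 = z$7 - z$8"
  "(bimat8 *v z)$8 = 2 * z$8"
  by (simp_all add: bimat8_def matrix_vector_mult_def sum_8 v8)

lemma BiB8: "bimat8 *v (bmat8 *v z) = z"
  by (simp add: vec_eq_iff forall_8 bcomp8 bicomp8 field_simps)

lemma BBi8: "bmat8 *v (bimat8 *v z) = z"
  by (simp add: vec_eq_iff forall_8 bcomp8 bicomp8 field_simps)

lemma E8_basis: "E8_lat = (\<lambda>z. bmat8 *v z) ` Zv"
proof (intro equalityI subsetI)
  fix x assume x: "x \<in> E8_lat"
  obtain k where k: "x$1 + x$2 + x$3 + x$4 + x$5 + x$6 + x$7 + x$8 = 2 * of_int k" using x unfolding E8_mem by blast
  have "bimat8 *v x \<in> Zv"
  proof -
    have "(\<forall>i. x$i \<in> \<int>) \<or> (\<forall>i. x$i - 1/2 \<in> \<int>)" using x unfolding E8_mem by blast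
    then show ?thesis
    proof
      assume xi: "\<forall>i. x$i \<in> \<int>"
      obtain m where m: "\<forall>i. x$i = of_int (m i)" using int_vec[OF xi] by blast
      have "real_of_int (m 1 + m 2 + m 3 + m 4 + m 5 + m 6 + m 7 + m 8) = real_of_int (2 * k)" using k m by simp
      then have m1: "m 1 = 2 * k - m 2 - m 3 - m 4 - m 5 - m 6 - m 7 - m 8" by linarith

      have c1: "(bimat8 *v x)$1 = of_int (k - 4 * m 8)" by (simp add: bicomp8 m m1 field_simps)
      have c2: "(bimat8 *v x)$2 = of_int (m 2 + m 3 + m 4 + m 5 + m 6 + m 7 - 6 * m 8)" by (simp add: bicomp8 m m1 field_simps)
      have c3: "(bimat8 *v x)$3 = of_int (m 3 + m 4 + m 5 + m 6 + m 7 - 5 * m 8)" by (simp add: bicomp8 m m1 field_simps)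
      have c4: "(bimat8 *v x)$4 = of_int (m 4 + m 5 + m 6 + m 7 - 4 * m 8)" by (simp add: bicomp8 m m1 field_simps)
      have c5: "(bimat8 *v x)$5 = of_int (m 5 + m 6 + m 7 - 3 * m 8)" by (simp add: bicomp8 m m1 field_simps)
      have c6: "(bimat8 *v x)$6 = of_int (m 6 + m 7 - 2 * m 8)" by (simp add: bicomp8 m m1 field_simps)
      have c7: "(bimat8 *v x)$7 = of_int (m 7 - 1 * m 8)" by (simp add: bicomp8 m m1 field_simps)
      have c8: "(bimat8 *v x)$8 = of_int (2 * m 8)" by (simp add: bicomp8 m m1 field_simps)
      have "(bimat8 *v x)$i \<in> \<int>" for i using exhaust_8[of i] c1 c2 c3 c4 c5 c6 c7 c8 by auto
      then show ?thesis unfolding Zv_def by blast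
    next
      assume xh: "\<forall>i. x$i - 1/2 \<in> \<int>"
      have "\<forall>i. (x - (\<chi> i. 1/2))$i \<in> \<int>" using xh by simp
      then obtain m0 where m0: "\<forall>i. (x - (\<chi> i. 1/2))$i = of_int (m0 i)" using int_vec by blast
      define m where "m = m0"
      have m: "\<forall>i. x$i = of_int (m i) + 1/2" using m0 unfolding m_def by (simp add: algebra_simps)
      have "real_of_int (m 1 + m 2 + m 3 + m 4 + m 5 + m 6 + m 7 + m 8 + 4) = real_of_int (2 * k)" using k m by simp
      then have m1: "m 1 = 2 * k - 4 - m 2 - m 3 - m 4 - m 5 - m 6 - m 7 - m 8" by linarith

      have c1: "(bimat8 *v x)$1 = of_int (k - 2 - 4 * m 8)" by (simp add: bicomp8 m m1 field_simps)
      have c2: "(bimat8 *v x)$2 = of_int (m 2 + m 3 + m 4 + m 5 + m 6 + m 7 - 6 * m 8)" by (simp add: bicomp8 m m1 field_simps)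
      have c3: "(bimat8 *v x)$3 = of_int (m 3 + m 4 + m 5 + m 6 + m 7 - 5 * m 8)" by (simp add: bicomp8 m m1 field_simps)
      have c4: "(bimat8 *v x)$4 = of_int (m 4 + m 5 + m 6 + m 7 - 4 * m 8)" by (simp add: bicomp8 m m1 field_simps)
      have c5: "(bimat8 *v x)$5 = of_int (m 5 + m 6 + m 7 - 3 * m 8)" by (simp add: bicomp8 m m1 field_simps)
      have c6: "(bimat8 *v x)$6 = of_int (m 6 + m 7 - 2 * m 8)" by (simp add: bicomp8 m m1 field_simps)
      have c7: "(bimat8 *v x)$7 = of_int (m 7 - 1 * m 8)" by (simp add: bicomp8 m m1 field_simps)
      have c8: "(bimat8 *v x)$8 = of_int (2 * m 8 + 1)" by (simp add: bicomp8 m m1 field_simps)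
      have "(bimat8 *v x)$i \<in> \<int>" for i using exhaust_8[of i] c1 c2 c3 c4 c5 c6 c7 c8 by auto
      then show ?thesis unfolding Zv_def by blast
    qed
  qed
  then show "x \<in> (\<lambda>z. bmat8 *v z) ` Zv" using BBi8[of x] by (metis image_eqI)
next
  fix x assume "x \<in> (\<lambda>z. bmat8 *v z) ` Zv"
  then obtain z where z: "z \<in> Zv" "x = bmat8 *v z" by blast
  obtain m where m: "\<forall>i. z$i = of_int (m i)" using z(1) int_vec unfolding Zv_def by blast
  have sumB: "(bmat8 *v z)$1 + (bmat8 *v z)$2 + (bmat8 *v z)$3 + (bmat8 *v z)$4 + (bmat8 *v z)$5 + (bmat8 *v z)$6 + (bmat8 *v z)$7 + (bmat8 *v z)$8 = 2 * of_int (m 1 + 2 * m 8)"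
    by (simp add: bcomp8 m field_simps)
  obtain t where "m 8 = 2 * t \<or> m 8 = 2 * t + 1" by (metis evenE oddE)
  then show "x \<in> E8_lat"
  proof
    assume t: "m 8 = 2 * t"

    have c1: "(bmat8 *v z)$1 = of_int (2 * m 1 - m 2 + t)" by (simp add: bcomp8 m t field_simps)
    have c2: "(bmat8 *v z)$2 = of_int (m 2 - m 3 + t)" by (simp add: bcomp8 m t field_simps)
    have c3: "(bmat8 *v z)$3 = of_int (m 3 - m 4 + t)" by (simp add: bcomp8 m t field_simps)
    have c4: "(bmat8 *v z)$4 = of_int (m 4 - m 5 + t)" by (simp add: bcomp8 m t field_simps)
    have c5: "(bmat8 *v z)$5 = of_int (m 5 - m 6 + t)" by (simp add: bcomp8 m t field_simps)
    have c6: "(bmat8 *v z)$6 = of_int (m 6 - m 7 + t)" by (simp add: bcomp8 m t field_simps)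
    have c7: "(bmat8 *v z)$7 = of_int (m 7 + t)" by (simp add: bcomp8 m t field_simps)
    have c8: "(bmat8 *v z)$8 = of_int (t)" by (simp add: bcomp8 m t field_simps)
    have "(bmat8 *v z)$i \<in> \<int>" for i using exhaust_8[of i] c1 c2 c3 c4 c5 c6 c7 c8 by auto
    then show ?thesis unfolding E8_mem z(2) using sumB by blast
  next
    assume t: "m 8 = 2 * t + 1"
    have c1: "(bmat8 *v z)$1 - 1/2 = of_int (2 * m 1 - m 2 + t)" by (simp add: bcomp8 m t field_simps)
    have c2: "(bmat8 *v z)$2 - 1/2 = of_int (m 2 - m 3 + t)" by (simp add: bcomp8 m t field_simps)
    have c3: "(bmat8 *v z)$3 - 1/2 = of_int (m 3 - m 4 + t)" by (simp add: bcomp8 m t field_simps)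
    have c4: "(bmat8 *v z)$4 - 1/2 = of_int (m 4 - m 5 + t)" by (simp add: bcomp8 m t field_simps)
    have c5: "(bmat8 *v z)$5 - 1/2 = of_int (m 5 - m 6 + t)" by (simp add: bcomp8 m t field_simps)
    have c6: "(bmat8 *v z)$6 - 1/2 = of_int (m 6 - m 7 + t)" by (simp add: bcomp8 m t field_simps)
    have c7: "(bmat8 *v z)$7 - 1/2 = of_int (m 7 + t)" by (simp add: bcomp8 m t field_simps)
    have c8: "(bmat8 *v z)$8 - 1/2 = of_int (t)" by (simp add: bcomp8 m t field_simps)
    have "(bmat8 *v z)$i - 1/2 \<in> \<int>" for i using exhaust_8[of i] c1 c2 c3 c4 c5 c6 c7 c8 by auto
    then show ?thesis unfolding E8_mem z(2) using sumB by blast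
  qed
qed

lemma sq_parity:
  fixes f :: "'a \<Rightarrow> int"
  shows "even (\<Sum>i\<in>I. (f i)^2) \<longleftrightarrow> even (\<Sum>i\<in>I. f i)"
proof -
  have "(\<Sum>i\<in>I. (f i)^2) = (\<Sum>i\<in>I. f i) + (\<Sum>i\<in>I. f i * (f i - 1))"
    by (simp add: sum.distrib[symmetric] power2_eq_square algebra_simps)
  moreover have "even (\<Sum>i\<in>I. f i * (f i - 1))" by (intro dvd_sum) auto
  ultimately show ?thesis by auto
qed

lemma halve2:
  fixes f :: "'a \<Rightarrow> int"
  assumes "finite I" "even (card I)" "even (\<Sum>i\<in>I. (f i)^2)"
  shows "\<exists>g. 2 * (\<Sum>i\<in>I. (g i)^2) = (\<Sum>i\<in>I. (f i)^2)"
  using halve_sq[OF assms(1,2)] assms(3) sq_parity by blast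

lemma E8_lb:
  assumes x: "x \<in> E8_lat" and nz: "x \<noteq> 0" shows "2 \<le> norm x ^ 2"
proof -
  have "(\<forall>i. x$i \<in> \<int>) \<or> (\<forall>i. x$i - 1/2 \<in> \<int>)" using x unfolding E8_lat_def by blast
  then show ?thesis
  proof
    assume xi: "\<forall>i. x$i \<in> \<int>"
    have "\<exists>k::int. (\<Sum>i\<in>UNIV. x$i) = 2 * of_int k" using x unfolding E8_lat_def by blast
    then show ?thesis using even_int_vec_ge2[OF xi _ nz] by blast
  next
    assume xh: "\<forall>i. x$i - 1/2 \<in> \<int>"
    have q: "1/4 \<le> (x$i)^2" for i
    proof -
      obtain z where z: "x$i - 1/2 = of_int z" using xh by (meson Ints_cases)
      have "0 \<le> z * (z + 1)"
      proof (cases "z \<ge> 0")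
        case True then show ?thesis by simp
      next
        case False then have "z + 1 \<le> 0" by simp
        then show ?thesis using False by (simp add: mult_nonpos_nonpos)
      qed
      then have "0 \<le> real_of_int (z * (z + 1))" by linarith
      moreover have "(x$i)^2 = 1/4 + real_of_int (z * (z + 1))"
      proof -
        have "x$i = of_int z + 1/2" using z by simp
        then show ?thesis by (simp add: power2_eq_square algebra_simps)
      qed
      ultimately show ?thesis by simp
    qed
    have "(\<Sum>i\<in>(UNIV::8 set). 1/4) \<le> (\<Sum>i\<in>UNIV. (x$i)^2)" by (intro sum_mono q)
    then show ?thesis by (simp add: nsq)
  qed
qed

lemma sq_abs_eq8: "d ^ 2 = (kk::real) ^ 8 \<Longrightarrow> \<bar>d\<bar> = kk ^ 4"
proof -
  assume h: "d ^ 2 = kk ^ 8"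
  have "\<bar>d\<bar> = sqrt (d ^ 2)" by simp
  also have "\<dots> = sqrt ((kk ^ 4) ^ 2)"
  proof -
    have e: "kk ^ 8 = (kk ^ 4) ^ 2" by (simp flip: power_mult)
    show ?thesis by (simp only: h e)
  qed
  also have "\<dots> = kk ^ 4" by (simp only: real_sqrt_abs abs_power2) (simp add: abs_power2 flip: power_mult)
  finally show ?thesis .
qed

lemma E8_main: "\<forall>n\<in>N_set E8_lat. has_lattice_code_of_size E8_lat n"
proof
  fix n assume n: "n \<in> N_set E8_lat"
  define v :: "real^8" where "v = vector [1,1,0,0,0,0,0,0]"
  have vc: "v$1 = 1" "v$2 = 1" "v$3 = 0" "v$4 = 0" "v$5 = 0" "v$6 = 0" "v$7 = 0" "v$8 = 0"
    by (simp_all add: v_def v8)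
  have v: "v \<in> E8_lat" "v \<noteq> 0" "norm v ^ 2 = 2"
  proof -
    show "v \<in> E8_lat" unfolding E8_mem
    proof (intro conjI disjI1 allI exI)
      show "v $ i \<in> \<int>" for i using exhaust_8[of i] vc by auto
      show "v$1 + v$2 + v$3 + v$4 + v$5 + v$6 + v$7 + v$8 = 2 * of_int 1" using vc by simp
    qed
    show "v \<noteq> 0" using vc(1) by (metis zero_index zero_neq_one)
    show "norm v ^ 2 = 2" by (simp add: nsq sum_8 vc)
  qed
  have mn: "min_norm E8_lat = sqrt 2" by (rule min_norm_eq[OF E8_lb v])
  have span: "span E8_lat = UNIV"
  proof (rule span_univ_axis)
    fix i :: 8
    have "(2::real) *\<^sub>R axis i 1 \<in> E8_lat" unfolding E8_lat_def
    proof (intro CollectI conjI disjI1 allI exI)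
      show "(2 *\<^sub>R axis i (1::real)) $ j \<in> \<int>" for j by (simp add: axis_def real_scaleR_def)
      show "(\<Sum>j\<in>UNIV. (2 *\<^sub>R axis i (1::real)) $ j) = 2 * of_int 1"
        by (simp add: axis_def real_scaleR_def sum.delta sum.delta' flip: sum_distrib_left)
    qed
    then show "\<exists>c. c \<noteq> 0 \<and> c *\<^sub>R axis i 1 \<in> E8_lat" by (intro exI[of _ 2]) simp
  qed
  have dim: "dim E8_lat = 8" using dim_univ[OF span] by simp
  obtain x where x: "x \<in> E8_lat" "x \<noteq> 0" "n = (norm x / sqrt 2)^8"
    using N_set_elem[OF mn n] dim by auto
  define kk where "kk = norm x ^ 2 / 2"
  have n2: "n = kk^4" by (simp only: x(3) pow8_sq kk_def)
  have kpos: "kk > 0" unfolding kk_def using x(2) by simp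
  have cU: "even (card (UNIV::8 set))" by simp
  obtain g :: "8 \<Rightarrow> int" where g: "real_of_int (\<Sum>i\<in>UNIV. (g i)^2) = kk"
  proof -
    have "(\<forall>i. x$i \<in> \<int>) \<or> (\<forall>i. x$i - 1/2 \<in> \<int>)" using x(1) unfolding E8_lat_def by blast
    then show ?thesis
    proof
      assume xi: "\<forall>i. x$i \<in> \<int>"
      obtain m where m: "\<forall>i. x$i = of_int (m i)" using int_vec[OF xi] by blast
      obtain k where k: "(\<Sum>i\<in>UNIV. x$i) = 2 * of_int k" using x(1) unfolding E8_lat_def by blast
      have "real_of_int (\<Sum>i\<in>UNIV. m i) = real_of_int (2 * k)" using k m by simp
      then have "(\<Sum>i\<in>UNIV. m i) = 2 * k" by linarith
      then have "even (\<Sum>i\<in>UNIV. m i)" by simp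
      then obtain g :: "8 \<Rightarrow> int" where g: "2 * (\<Sum>i\<in>UNIV. (g i)^2) = (\<Sum>i\<in>(UNIV::8 set). (m i)^2)"
        using halve_sq[of "UNIV::8 set" m] by auto
      have "norm x ^ 2 = real_of_int (\<Sum>i\<in>UNIV. (m i)^2)" by (simp add: nsq m)
      then have "real_of_int (\<Sum>i\<in>UNIV. (g i)^2) = kk" unfolding kk_def using g
        by (metis (mono_tags, lifting) nonzero_mult_div_cancel_left of_int_mult of_int_numeral zero_neq_numeral)
      then show ?thesis by (rule that)
    next
      assume xh: "\<forall>i. x$i - 1/2 \<in> \<int>"
      have "\<forall>i. (x - (\<chi> i. 1/2))$i \<in> \<int>" using xh by simp
      then obtain m0 where m0: "\<forall>i. (x - (\<chi> i. 1/2))$i = of_int (m0 i)" using int_vec by blast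
      define m where "m = m0"
      have m: "\<forall>i. x$i = of_int (m i) + 1/2" using m0 unfolding m_def by (simp add: algebra_simps)
      define f where "f i = 2 * m i + 1" for i
      have "even (\<Sum>i\<in>(UNIV::8 set). m i * (m i + 1))" by (intro dvd_sum) auto
      then obtain P where P: "(\<Sum>i\<in>(UNIV::8 set). m i * (m i + 1)) = 2 * P" by (metis evenE)
      have "(\<Sum>i\<in>UNIV. (f i)^2) = (\<Sum>i\<in>(UNIV::8 set). 4 * (m i * (m i + 1)) + 1)"
        unfolding f_def by (intro sum.cong refl) (simp add: power2_eq_square algebra_simps)
      also have "\<dots> = 4 * (\<Sum>i\<in>(UNIV::8 set). m i * (m i + 1)) + 8"
        by (simp add: sum.distrib sum_distrib_left)
      finally have sf: "(\<Sum>i\<in>UNIV. (f i)^2) = 8 * (P + 1)" using P by simp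
      have "norm x ^ 2 = (\<Sum>i\<in>UNIV. (real_of_int (f i))^2 / 4)"
        unfolding nsq f_def using m by (intro sum.cong refl) (simp add: power2_eq_square algebra_simps)
      also have "\<dots> = real_of_int (\<Sum>i\<in>UNIV. (f i)^2) / 4" by (simp add: sum_divide_distrib)
      finally have nx: "norm x ^ 2 = 2 * real_of_int (P + 1)" using sf by simp
      obtain g1 :: "8 \<Rightarrow> int" where g1: "2 * (\<Sum>i\<in>UNIV. (g1 i)^2) = (\<Sum>i\<in>(UNIV::8 set). (f i)^2)"
        using halve2[of "UNIV::8 set" f] sf by auto
      have e1: "(\<Sum>i\<in>UNIV. (g1 i)^2) = 2 * (2 * (P + 1))" using g1 sf by simp
      obtain g2 :: "8 \<Rightarrow> int" where g2: "2 * (\<Sum>i\<in>UNIV. (g2 i)^2) = (\<Sum>i\<in>(UNIV::8 set). (g1 i)^2)"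
        using halve2[of "UNIV::8 set" g1] e1 by auto
      have e2: "(\<Sum>i\<in>UNIV. (g2 i)^2) = 2 * (P + 1)" using g2 e1 by simp
      obtain g3 :: "8 \<Rightarrow> int" where g3: "2 * (\<Sum>i\<in>UNIV. (g3 i)^2) = (\<Sum>i\<in>(UNIV::8 set). (g2 i)^2)"
        using halve2[of "UNIV::8 set" g2] e2 by auto
      have "(\<Sum>i\<in>UNIV. (g3 i)^2) = P + 1" using g3 e2 by simp
      then have "real_of_int (\<Sum>i\<in>UNIV. (g3 i)^2) = kk" unfolding kk_def nx by simp
      then show ?thesis by (rule that)
    qed
  qed
  define a :: "real^8" where "a = (\<chi> i. of_int (g i))"
  have aint: "\<forall>i. a$i \<in> \<int>" by (simp add: a_def)
  have na: "norm a ^ 2 = kk" using g by (simp add: nsq a_def)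
  define S where "S = (\<lambda>y. omat a *v y)"
  have linS: "linear S" unfolding S_def by simp
  have nrm: "norm (S y)^2 = kk * norm y^2" for y using o_norm na S_def by simp
  have SL: "S ` E8_lat \<subseteq> E8_lat" using E8_S aint S_def by auto
  have linB: "linear (\<lambda>z. bmat8 *v z)" by simp
  have linBi: "linear (\<lambda>z. bimat8 *v z)" by simp
  note fr = full_rank_code[OF linS linB linBi BiB8 BBi8 E8_basis SL span kpos nrm]
  have "\<bar>det (matrix S)\<bar> = kk ^ 4" using fr(2) by (intro sq_abs_eq8) simp
  then show "has_lattice_code_of_size E8_lat n" using fr(1) n2 by simp
qed

lemma A1_mem: "(x::real^2) \<in> A_lat \<longleftrightarrow> (\<forall>i. x$i \<in> \<int>) \<and> x$1 + x$2 = 0"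
  by (simp add: A_lat_def sum_2)

definition bmat1 :: "real^1^2" where "bmat1 = vector [vector [1], vector [-1]]"

lemma bcomp1: "(bmat1 *v z)$1 = z$1" "(bmat1 *v z)$2 = - z$1"
  by (simp_all add: bmat1_def matrix_vector_mult_def)

lemma A1_basis: "(A_lat :: (real^2) set) = (\<lambda>z. bmat1 *v z) ` Zv"
proof (intro equalityI subsetI)
  fix x :: "real^2" assume x: "x \<in> A_lat"
  define z :: "real^1" where "z = vector [x$1]"
  have "z \<in> Zv" using x unfolding Zv_def z_def A1_mem by simp
  moreover have "x = bmat1 *v z" using x unfolding A1_mem
    by (simp add: vec_eq_iff forall_2 bcomp1 z_def)
  ultimately show "x \<in> (\<lambda>z. bmat1 *v z) ` Zv" by blast
next
  fix x assume "x \<in> (\<lambda>z. bmat1 *v z) ` Zv"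
  then obtain z where z: "z \<in> Zv" "x = bmat1 *v z" by blast
  then have z1: "z$1 \<in> \<int>" unfolding Zv_def by blast
  have "(bmat1 *v z)$i \<in> \<int>" for i using exhaust_2[of i] z1 by (auto simp: bcomp1)
  then show "x \<in> A_lat" unfolding A1_mem z(2) by (simp add: bcomp1)
qed

lemma A1_main: "\<forall>n\<in>N_set (A_lat :: (real^2) set). has_lattice_code_of_size (A_lat :: (real^2) set) n"
proof
  fix n assume n: "n \<in> N_set (A_lat :: (real^2) set)"
  define L :: "(real^2) set" where "L = A_lat"
  have lb: "2 \<le> norm x ^ 2" if "x \<in> L" "x \<noteq> 0" for x
    using that unfolding L_def A_lat_def by (intro even_int_vec_ge2) auto
  define v :: "real^2" where "v = vector [1, -1]"
  have vc: "v$1 = 1" "v$2 = -1" by (simp_all add: v_def)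
  have v: "v \<in> L" "v \<noteq> 0" "norm v ^ 2 = 2"
  proof -
    show "v \<in> L" unfolding L_def A1_mem
    proof (intro conjI allI)
      show "v$i \<in> \<int>" for i using exhaust_2[of i] vc by auto
      show "v$1 + v$2 = 0" using vc by simp
    qed
    show "v \<noteq> 0" using vc(1) by (metis zero_index zero_neq_one)
    show "norm v ^ 2 = 2" by (simp add: nsq sum_2 vc)
  qed
  have mn: "min_norm L = sqrt 2" by (rule min_norm_eq[OF lb v])
  define V :: "(real^2) set" where "V = {x. (vector [1, 1] :: real^2) \<bullet> x = 0}"
  have V: "V = {x. x$1 + x$2 = 0}" unfolding V_def by (simp add: inner_vec_def sum_2)
  have spanL: "span L = V"
  proof
    have "subspace V" unfolding V_def by (rule subspace_hyperplane)
    moreover have "L \<subseteq> V" by (auto simp: V L_def A1_mem)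
    ultimately show "span L \<subseteq> V" by (rule span_minimal[rotated])
  next
    show "V \<subseteq> span L"
    proof
      fix x assume "x \<in> V"
      then have "x = x$1 *\<^sub>R v" unfolding V by (simp add: vec_eq_iff forall_2 vc)
      then show "x \<in> span L" using v(1) by (metis span_base span_mul)
    qed
  qed
  have "dim L = 1"
  proof -
    have "(vector [1, 1] :: real^2) \<noteq> 0" by (metis vector_2(1) zero_index zero_neq_one)
    then have "dim V = DIM(real^2) - 1" unfolding V_def by (rule dim_hyperplane)
    then show ?thesis using dim_span[of L] spanL by simp
  qed
  then obtain x where x: "x \<in> L" "x \<noteq> 0" "n = norm x / sqrt 2"
    using N_set_elem[OF mn n[folded L_def]] by auto
  obtain m where m: "\<forall>i. x$i = of_int (m i)" using x(1) int_vec unfolding L_def A1_mem by blast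
  have x2: "x$2 = - x$1" using x(1) unfolding L_def A1_mem by simp
  define c where "c = \<bar>x$1\<bar>"
  have "norm x ^ 2 = 2 * c^2" unfolding c_def by (simp add: nsq sum_2 x2)
  then have "norm x = sqrt 2 * c" unfolding c_def
    by (metis abs_ge_zero norm_ge_zero real_sqrt_abs real_sqrt_mult real_sqrt_unique)
  then have nc: "n = c" using x(3) by simp
  have cint: "c \<in> \<int>" unfolding c_def using m by simp
  have cpos: "c > 0"
  proof -
    have "x$1 \<noteq> 0" using x(2) x2 by (metis vec_eq_iff exhaust_2 zero_index neg_equal_0_iff_equal)
    then show ?thesis unfolding c_def by simp
  qed
  define S :: "real^2 \<Rightarrow> real^2" where "S = (\<lambda>y. c *\<^sub>R y)"
  define T :: "real^2 \<Rightarrow> real^2" where "T = (\<lambda>y. (1/c) *\<^sub>R y)"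
  have linS: "linear S" unfolding S_def by simp
  have linT: "linear T" unfolding T_def by simp
  have SL: "S ` L \<subseteq> L"
  proof
    fix y assume "y \<in> S ` L"
    then obtain w where w: "w \<in> L" "y = c *\<^sub>R w" unfolding S_def by blast
    have wi: "\<forall>i. w$i \<in> \<int>" "w$1 + w$2 = 0" using w(1) unfolding L_def A1_mem by auto
    have "(c *\<^sub>R w)$i \<in> \<int>" for i using wi(1) cint by (simp add: Ints_mult)
    moreover have "(c *\<^sub>R w)$1 + (c *\<^sub>R w)$2 = 0" using wi(2) by (simp flip: distrib_left)
    ultimately show "y \<in> L" unfolding L_def A1_mem w(2) by blast
  qed
  have idx: "real (lattice_index L (S ` L)) = c"
  proof -
    have linB: "linear (\<lambda>z. bmat1 *v z)" by simp
    have injB: "inj (\<lambda>z. bmat1 *v z)"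
    proof (rule injI)
      fix z z' :: "real^1" assume "bmat1 *v z = bmat1 *v z'"
      then have "(bmat1 *v z)$1 = (bmat1 *v z')$1" by simp
      then show "z = z'" by (simp add: bcomp1 vec_eq_iff)
    qed
    have linG: "linear ((*\<^sub>R) c :: real^1 \<Rightarrow> real^1)" by simp
    have comm: "S (bmat1 *v z) = bmat1 *v (c *\<^sub>R z)" for z
      unfolding S_def by (simp add: vec_eq_iff forall_2 bcomp1)
    have GZ: "((*\<^sub>R) c) ` Zv \<subseteq> (Zv :: (real^1) set)" unfolding Zv_def using cint by auto
    have dG: "det (matrix ((*\<^sub>R) c :: real^1 \<Rightarrow> real^1)) \<noteq> 0" using cpos by simp
    have "real (lattice_index ((\<lambda>z. bmat1 *v z) ` Zv) (S ` (\<lambda>z. bmat1 *v z) ` Zv)) = \<bar>det (matrix ((*\<^sub>R) c :: real^1 \<Rightarrow> real^1))\<bar>"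
      by (rule index_basis[OF linB injB linG comm GZ dG])
    then show ?thesis unfolding L_def A1_basis[symmetric] using cpos by simp
  qed
  have "has_lattice_code_of_size L c"
  proof (rule code_from_sim[OF linS linT SL])
    show "T ` span L \<subseteq> span L" unfolding T_def by (auto intro: span_mul)
    show "S (T x) = x" for x unfolding S_def T_def using cpos by simp
    show "T (S x) = x" for x unfolding S_def T_def using cpos by simp
    show "0 < 1 / c" using cpos by simp
    show "norm (T x) = (1 / c) * norm x" for x unfolding T_def using cpos by simp
  qed (rule idx)
  then show "has_lattice_code_of_size (A_lat :: (real^2) set) n" using nc L_def by simp
qed

lemma A2_mem: "(x::real^3) \<in> A_lat \<longleftrightarrow> (\<forall>i. x$i \<in> \<int>) \<and> x$1 + x$2 + x$3 = 0"
  by (simp add: A_lat_def sum_3)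

definition bmat2 :: "real^2^3" where "bmat2 = vector [vector [1, 0], vector [0, 1], vector [-1, -1]]"

lemma bcomp2: "(bmat2 *v z)$1 = z$1" "(bmat2 *v z)$2 = z$2" "(bmat2 *v z)$3 = - z$1 - z$2"
  by (simp_all add: bmat2_def matrix_vector_mult_def sum_2)

lemma A2_basis: "(A_lat :: (real^3) set) = (\<lambda>z. bmat2 *v z) ` Zv"
proof (intro equalityI subsetI)
  fix x :: "real^3" assume x: "x \<in> A_lat"
  define z :: "real^2" where "z = vector [x$1, x$2]"
  have "z$i \<in> \<int>" for i using x exhaust_2[of i] unfolding z_def A2_mem by auto
  then have "z \<in> Zv" unfolding Zv_def by blast
  moreover have "x = bmat2 *v z" using x unfolding A2_mem
    by (simp add: vec_eq_iff forall_3 bcomp2 z_def; linarith)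
  ultimately show "x \<in> (\<lambda>z. bmat2 *v z) ` Zv" by blast
next
  fix x assume "x \<in> (\<lambda>z. bmat2 *v z) ` Zv"
  then obtain z where z: "z \<in> Zv" "x = bmat2 *v z" by blast
  then have zi: "z$1 \<in> \<int>" "z$2 \<in> \<int>" unfolding Zv_def by blast+
  have "(bmat2 *v z)$i \<in> \<int>" for i using exhaust_3[of i] zi by (auto simp: bcomp2)
  then show "x \<in> A_lat" unfolding A2_mem z(2) by (simp add: bcomp2)
qed

lemma A2_main: "\<forall>n\<in>N_set (A_lat :: (real^3) set). has_lattice_code_of_size (A_lat :: (real^3) set) n"
proof
  fix n assume n: "n \<in> N_set (A_lat :: (real^3) set)"
  define L :: "(real^3) set" where "L = A_lat"
  have lb: "2 \<le> norm x ^ 2" if "x \<in> L" "x \<noteq> 0" for x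
    using that unfolding L_def A_lat_def by (intro even_int_vec_ge2) auto
  define v :: "real^3" where "v = vector [1, -1, 0]"
  have vc: "v$1 = 1" "v$2 = -1" "v$3 = 0" by (simp_all add: v_def)
  have v: "v \<in> L" "v \<noteq> 0" "norm v ^ 2 = 2"
  proof -
    show "v \<in> L" unfolding L_def A2_mem
    proof (intro conjI allI)
      show "v$i \<in> \<int>" for i using exhaust_3[of i] vc by auto
      show "v$1 + v$2 + v$3 = 0" using vc by simp
    qed
    show "v \<noteq> 0" using vc(1) by (metis zero_index zero_neq_one)
    show "norm v ^ 2 = 2" by (simp add: nsq sum_3 vc)
  qed
  have mn: "min_norm L = sqrt 2" by (rule min_norm_eq[OF lb v])
  define V :: "(real^3) set" where "V = {x. (vector [1, 1, 1] :: real^3) \<bullet> x = 0}"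
  have V: "V = {x. x$1 + x$2 + x$3 = 0}" unfolding V_def by (simp add: inner_vec_def sum_3)
  define w :: "real^3" where "w = vector [0, 1, -1]"
  have wc: "w$1 = 0" "w$2 = 1" "w$3 = -1" by (simp_all add: w_def)
  define u :: "real^3" where "u = vector [1, 0, -1]"
  have uc: "u$1 = 1" "u$2 = 0" "u$3 = -1" by (simp_all add: u_def)
  have uL: "u \<in> L" "w \<in> L"
  proof -
    show "u \<in> L" unfolding L_def A2_mem
    proof (intro conjI allI)
      show "u$i \<in> \<int>" for i using exhaust_3[of i] uc by auto
      show "u$1 + u$2 + u$3 = 0" using uc by simp
    qed
    show "w \<in> L" unfolding L_def A2_mem
    proof (intro conjI allI)
      show "w$i \<in> \<int>" for i using exhaust_3[of i] wc by auto
      show "w$1 + w$2 + w$3 = 0" using wc by simp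
    qed
  qed
  have spanL: "span L = V"
  proof
    have "subspace V" unfolding V_def by (rule subspace_hyperplane)
    moreover have "L \<subseteq> V" by (auto simp: V L_def A2_mem)
    ultimately show "span L \<subseteq> V" by (rule span_minimal[rotated])
  next
    show "V \<subseteq> span L"
    proof
      fix x assume "x \<in> V"
      then have "x = x$1 *\<^sub>R u + x$2 *\<^sub>R w" unfolding V by (simp add: vec_eq_iff forall_3 uc wc; linarith)
      then show "x \<in> span L" using uL by (metis span_add span_base span_mul)
    qed
  qed
  have "dim L = 2"
  proof -
    have "(vector [1, 1, 1] :: real^3) \<noteq> 0" by (metis vector_3(1) zero_index zero_neq_one)
    then have "dim V = DIM(real^3) - 1" unfolding V_def by (rule dim_hyperplane)
    then show ?thesis using dim_span[of L] spanL by simp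
  qed
  then obtain x where x: "x \<in> L" "x \<noteq> 0" "n = (norm x / sqrt 2)^2"
    using N_set_elem[OF mn n[folded L_def]] by auto
  have xi: "\<forall>i. x$i \<in> \<int>" and x3: "x$3 = - x$1 - x$2" using x(1) unfolding L_def A2_mem by auto
  define p where "p = x$1"
  define q where "q = x$2"
  have pq: "p \<in> \<int>" "q \<in> \<int>" using xi p_def q_def by auto
  define nn where "nn = p^2 + p*q + q^2"
  have "norm x ^ 2 = 2 * nn" unfolding nn_def p_def q_def nsq sum_3 x3 by (simp add: power2_eq_square algebra_simps)
  then have nnn: "n = nn" using x(3) by (simp add: power_divide)
  have "0 < norm x ^ 2" using x(2) by simp
  then have nnpos: "nn > 0" using \<open>norm x ^ 2 = 2 * nn\<close> by simp
  define smat :: "real^3^3" where "smat = vector [vector [p, 0, -q], vector [-q, p, 0], vector [0, -q, p]]"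
  define tmat :: "real^3^3" where "tmat = vector [vector [p/nn, -q/nn, 0], vector [0, p/nn, -q/nn], vector [-q/nn, 0, p/nn]]"
  define gmat :: "real^2^2" where "gmat = vector [vector [p + q, q], vector [-q, p]]"
  have sc: "(smat *v y)$1 = p * y$1 - q * y$3" "(smat *v y)$2 = p * y$2 - q * y$1" "(smat *v y)$3 = p * y$3 - q * y$2" for y
    by (simp_all add: smat_def matrix_vector_mult_def sum_3)
  have tc: "(tmat *v y)$1 = (p * y$1 - q * y$2) / nn" "(tmat *v y)$2 = (p * y$2 - q * y$3) / nn"
    "(tmat *v y)$3 = (p * y$3 - q * y$1) / nn" for y
    by (simp_all add: tmat_def matrix_vector_mult_def sum_3 diff_divide_distrib)
  have gc: "(gmat *v y)$1 = (p + q) * y$1 + q * y$2" "(gmat *v y)$2 = p * y$2 - q * y$1" for y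
    by (simp_all add: gmat_def matrix_vector_mult_def sum_2)
  define S where "S = (\<lambda>y. smat *v y)"
  define T where "T = (\<lambda>y. tmat *v y)"
  have linS: "linear S" unfolding S_def by simp
  have linT: "linear T" unfolding T_def by simp
  have SL: "S ` L \<subseteq> L"
  proof
    fix y assume "y \<in> S ` L"
    then obtain z where z: "z \<in> L" "y = smat *v z" unfolding S_def by blast
    have zi: "\<forall>i. z$i \<in> \<int>" "z$1 + z$2 + z$3 = 0" using z(1) unfolding L_def A2_mem by auto
    have "(smat *v z)$i \<in> \<int>" for i using exhaust_3[of i] zi(1) pq by (auto simp: sc)
    moreover have "(smat *v z)$1 + (smat *v z)$2 + (smat *v z)$3 = 0"
    proof -
      have "(smat *v z)$1 + (smat *v z)$2 + (smat *v z)$3 = (p - q) * (z$1 + z$2 + z$3)"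
        by (simp add: sc algebra_simps)
      then show ?thesis using zi(2) by simp
    qed
    ultimately show "y \<in> L" unfolding L_def A2_mem z(2) by blast
  qed
  have idx: "real (lattice_index L (S ` L)) = nn"
  proof -
    have linB: "linear (\<lambda>z. bmat2 *v z)" by simp
    have injB: "inj (\<lambda>z. bmat2 *v z)"
    proof (rule injI)
      fix z z' :: "real^2" assume e: "bmat2 *v z = bmat2 *v z'"
      have "(bmat2 *v z)$1 = (bmat2 *v z')$1" "(bmat2 *v z)$2 = (bmat2 *v z')$2" using e by simp_all
      then show "z = z'" by (simp add: bcomp2 vec_eq_iff forall_2)
    qed
    have linG: "linear (\<lambda>z. gmat *v z)" by simp
    have comm: "S (bmat2 *v z) = bmat2 *v (gmat *v z)" for z
      unfolding S_def by (simp add: vec_eq_iff forall_3 bcomp2 sc gc algebra_simps)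
    have GZ: "(\<lambda>z. gmat *v z) ` Zv \<subseteq> Zv"
    proof
      fix y assume "y \<in> (\<lambda>z. gmat *v z) ` Zv"
      then obtain z where z: "z \<in> Zv" "y = gmat *v z" by blast
      then have zi: "z$1 \<in> \<int>" "z$2 \<in> \<int>" unfolding Zv_def by blast+
      have "(gmat *v z)$i \<in> \<int>" for i using exhaust_2[of i] zi pq by (auto simp: gc)
      then show "y \<in> Zv" unfolding Zv_def z(2) by blast
    qed
    have dG: "det (matrix (\<lambda>z. gmat *v z)) = nn"
      by (simp add: det_2 gmat_def nn_def power2_eq_square algebra_simps)
    have "real (lattice_index ((\<lambda>z. bmat2 *v z) ` Zv) (S ` (\<lambda>z. bmat2 *v z) ` Zv)) = \<bar>det (matrix (\<lambda>z. gmat *v z))\<bar>"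
      by (rule index_basis[OF linB injB linG comm GZ]) (use dG nnpos in simp)
    then show ?thesis unfolding L_def A2_basis[symmetric] using dG nnpos by simp
  qed
  have "has_lattice_code_of_size L nn"
  proof (rule code_from_sim[OF linS linT SL])
    show "T ` span L \<subseteq> span L"
    proof
      fix y assume "y \<in> T ` span L"
      then obtain z where z: "z \<in> V" "y = tmat *v z" unfolding T_def spanL by blast
      have "(tmat *v z)$1 + (tmat *v z)$2 + (tmat *v z)$3 = (p - q) * (z$1 + z$2 + z$3) / nn"
        using nnpos by (simp add: tc field_simps)
      then show "y \<in> span L" unfolding spanL V z(2) using z(1) unfolding V by simp
    qed
    show "S (T y) = y" if "y \<in> span L" for y
    proof -
      have y3: "y$3 = - y$1 - y$2" using that unfolding spanL V by simp
      have e1: "p * (p * y$1 - q * y$2) - q * (p * y$3 - q * y$1) = nn * y$1"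
        unfolding nn_def y3 by (simp add: algebra_simps power2_eq_square)
      have e2: "p * (p * y$2 - q * y$3) - q * (p * y$1 - q * y$2) = nn * y$2"
        unfolding nn_def y3 by (simp add: algebra_simps power2_eq_square)
      have e3: "p * (p * y$3 - q * y$1) - q * (p * y$2 - q * y$3) = nn * y$3"
        unfolding nn_def y3 by (simp add: algebra_simps power2_eq_square)
      have h: "p * u / nn - q * w / nn = yy" if "p * u - q * w = nn * yy" for u w yy
        using that nnpos by (simp add: field_simps)
      show ?thesis unfolding S_def T_def
        by (simp add: vec_eq_iff forall_3 sc tc h[OF e1] h[OF e2] h[OF e3])
    qed
    show "T (S y) = y" if "y \<in> span L" for y
    proof -
      have y3: "y$3 = - y$1 - y$2" using that unfolding spanL V by simp
      have e1: "p * (p * y$1 - q * y$3) - q * (p * y$2 - q * y$1) = nn * y$1"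
        unfolding nn_def y3 by (simp add: algebra_simps power2_eq_square)
      have e2: "p * (p * y$2 - q * y$1) - q * (p * y$3 - q * y$2) = nn * y$2"
        unfolding nn_def y3 by (simp add: algebra_simps power2_eq_square)
      have e3: "p * (p * y$3 - q * y$2) - q * (p * y$1 - q * y$3) = nn * y$3"
        unfolding nn_def y3 by (simp add: algebra_simps power2_eq_square)
      have h: "(p * u - q * w) / nn = yy" if "p * u - q * w = nn * yy" for u w yy
        using that nnpos by simp
      show ?thesis unfolding S_def T_def
        by (simp add: vec_eq_iff forall_3 sc tc h[OF e1] h[OF e2] h[OF e3])
    qed
    show "0 < 1 / sqrt nn" using nnpos by simp
    show "norm (T y) = (1 / sqrt nn) * norm y" if "y \<in> span L" for y
    proof -
      have y3: "y$3 = - y$1 - y$2" using that unfolding spanL V by simp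
      have e: "(p * y$1 - q * y$2)^2 + (p * y$2 - q * y$3)^2 + (p * y$3 - q * y$1)^2 = nn * ((y$1)^2 + (y$2)^2 + (y$3)^2)"
        unfolding nn_def y3 by (simp add: algebra_simps power2_eq_square)
      have "norm (T y) ^ 2 = ((p * y$1 - q * y$2)^2 + (p * y$2 - q * y$3)^2 + (p * y$3 - q * y$1)^2) / nn^2"
        unfolding T_def nsq sum_3 tc by (simp add: power_divide add_divide_distrib)
      also have "\<dots> = norm y ^ 2 / nn" unfolding e nsq sum_3 using nnpos by (simp add: power2_eq_square)
      also have "\<dots> = (norm y / sqrt nn) ^ 2" using nnpos by (simp add: power_divide)
      finally have "norm (T y) = norm y / sqrt nn" using nnpos by (simp add: power2_eq_iff_nonneg)
      then show ?thesis by simp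
    qed
  qed (rule idx)
  then show "has_lattice_code_of_size (A_lat :: (real^3) set) n" using nnn L_def by simp
qed

theorem lemma4p8:
  shows "(\<forall>n\<in>N_set (A_lat :: (real^2) set). has_lattice_code_of_size (A_lat :: (real^2) set) n)
       \<and> (\<forall>n\<in>N_set (A_lat :: (real^3) set). has_lattice_code_of_size (A_lat :: (real^3) set) n)
       \<and> (\<forall>n\<in>N_set D4_lat. has_lattice_code_of_size D4_lat n)
       \<and> (\<forall>n\<in>N_set E8_lat. has_lattice_code_of_size E8_lat n)"
  using A1_main A2_main D4_main E8_main by blast

end
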